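(* Let $\mathcal{H}_A,\mathcal{H}_B,\mathcal{H}_{B'}$ be finite-dimensional Hilbert spaces and let $\mathcal{N}:\mathbf{L}(\mathcal{H}_A)\to\mathbf{L}(\mathcal{H}_B)$ and $\mathcal{N}':\mathbf{L}(\mathcal{H}_A)\to\mathbf{L}(\mathcal{H}_{B'})$ be CPTP maps. Suppose the output of $\mathcal{N}'$ is abelian, i.e. $[\mathcal{N}'(\rho),\mathcal{N}'(\sigma)]=0$ for all density operators $\rho,\sigma$ on $\mathcal{H}_A$. Then $\mathcal{N}\succeq\mathcal{N}'$ if and only if there exists a CPTP map $\mathcal{C}:\mathbf{L}(\mathcal{H}_B)\to\mathbf{L}(\mathcal{H}_{B'})$ such that $\mathcal{N}'=\mathcal{C}\circ\mathcal{N}$.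
   Context: For an ensemble $\mathcal{E}=\{p(x);\rho^x\}_{x\in\mathcal{X}}$ (finite set $\mathcal{X}$, probability distribution $p$, density operators $\rho^x$), the guessing probability is $P_{\mathrm{guess}}(\mathcal{E})=\max\sum_xp(x)\operatorname{Tr}[P^x\rho^x]$ over all POVMs $\{P^x\}_x$. We write $\mathcal{N}\succeq\mathcal{N}'$ ($\mathcal{N}$ is more informative than $\mathcal{N}'$) if for every finite set $\mathcal{X}$ and every ensemble $\mathcal{E}=\{p(x);\rho^x_A\}_{x\in\mathcal{X}}$ of density operators on $\mathcal{H}_A$ one has $P_{\mathrm{guess}}(\{p(x);\mathcal{N}(\rho^x_A)\}_x)\ge P_{\mathrm{guess}}(\{p(x);\mathcal{N}'(\rho^x_A)\}_x)$. *)

theory Defs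
  imports "Jordan_Normal_Form.Matrix"
begin

text \<open>Operators on a d-dimensional Hilbert space are d x d complex matrices
(Jordan_Normal_Form type complex mat, with carrier_mat d d).\<close>

definition mtrace :: "complex mat \<Rightarrow> complex" where
  "mtrace M = (\<Sum>i<dim_row M. M $$ (i, i))"

definition psd :: "nat \<Rightarrow> complex mat \<Rightarrow> bool" where
  "psd n M \<longleftrightarrow> M \<in> carrier_mat n n \<and>
     (\<forall>v \<in> carrier_vec n. Im (v \<bullet>c (M *\<^sub>v v)) = 0 \<and> Re (v \<bullet>c (M *\<^sub>v v)) \<ge> 0)"

definition density :: "nat \<Rightarrow> complex mat \<Rightarrow> bool" where
  "density n \<rho> \<longleftrightarrow> psd n \<rho> \<and> mtrace \<rho> = 1"

definition lin_map :: "nat \<Rightarrow> nat \<Rightarrow> (complex mat \<Rightarrow> complex mat) \<Rightarrow> bool" where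
  "lin_map dA dB N \<longleftrightarrow>
     (\<forall>X \<in> carrier_mat dA dA. N X \<in> carrier_mat dB dB) \<and>
     (\<forall>X \<in> carrier_mat dA dA. \<forall>Y \<in> carrier_mat dA dA. \<forall>a b :: complex.
        N (a \<cdot>\<^sub>m X + b \<cdot>\<^sub>m Y) = a \<cdot>\<^sub>m N X + b \<cdot>\<^sub>m N Y)"

text \<open>The map id_k tensor N acting on block matrices in L(C^k tensor C^dA):
 a (k*dA) x (k*dA) matrix is viewed as a k x k array of dA x dA blocks.\<close>
definition block :: "nat \<Rightarrow> complex mat \<Rightarrow> nat \<Rightarrow> nat \<Rightarrow> complex mat" where
  "block d M p q = mat d d (\<lambda>(r, s). M $$ (p * d + r, q * d + s))"

definition ampliate :: "nat \<Rightarrow> nat \<Rightarrow> nat \<Rightarrow> (complex mat \<Rightarrow> complex mat) \<Rightarrow> complex mat \<Rightarrow> complex mat" where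
  "ampliate k dA dB N M = mat (k * dB) (k * dB)
     (\<lambda>(i, j). N (block dA M (i div dB) (j div dB)) $$ (i mod dB, j mod dB))"

definition completely_positive :: "nat \<Rightarrow> nat \<Rightarrow> (complex mat \<Rightarrow> complex mat) \<Rightarrow> bool" where
  "completely_positive dA dB N \<longleftrightarrow>
     (\<forall>k::nat. \<forall>M. psd (k * dA) M \<longrightarrow> psd (k * dB) (ampliate k dA dB N M))"

definition trace_preserving :: "nat \<Rightarrow> (complex mat \<Rightarrow> complex mat) \<Rightarrow> bool" where
  "trace_preserving dA N \<longleftrightarrow> (\<forall>X \<in> carrier_mat dA dA. mtrace (N X) = mtrace X)"

definition CPTP :: "nat \<Rightarrow> nat \<Rightarrow> (complex mat \<Rightarrow> complex mat) \<Rightarrow> bool" where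
  "CPTP dA dB N \<longleftrightarrow> lin_map dA dB N \<and> completely_positive dA dB N \<and> trace_preserving dA N"

definition ensemble :: "nat \<Rightarrow> nat set \<Rightarrow> (nat \<Rightarrow> real) \<Rightarrow> (nat \<Rightarrow> complex mat) \<Rightarrow> bool" where
  "ensemble d X p \<rho> \<longleftrightarrow> finite X \<and> (\<forall>x \<in> X. p x \<ge> 0 \<and> density d (\<rho> x)) \<and> (\<Sum>x\<in>X. p x) = 1"

definition POVM :: "nat \<Rightarrow> nat set \<Rightarrow> (nat \<Rightarrow> complex mat) \<Rightarrow> bool" where
  "POVM d X P \<longleftrightarrow> (\<forall>x \<in> X. psd d (P x)) \<and> (\<forall>i<d. \<forall>j<d. (\<Sum>x\<in>X. P x $$ (i, j)) = (if i = j then 1 else 0))"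

definition P_guess :: "nat \<Rightarrow> nat set \<Rightarrow> (nat \<Rightarrow> real) \<Rightarrow> (nat \<Rightarrow> complex mat) \<Rightarrow> real" where
  "P_guess d X p \<rho> = Sup {(\<Sum>x\<in>X. p x * Re (mtrace (P x * \<rho> x))) | P. POVM d X P}"

definition more_informative ::
  "nat \<Rightarrow> nat \<Rightarrow> (complex mat \<Rightarrow> complex mat) \<Rightarrow> nat \<Rightarrow> (complex mat \<Rightarrow> complex mat) \<Rightarrow> bool" where
  "more_informative dA dB N dB' N' \<longleftrightarrow>
     (\<forall>X p \<rho>. ensemble dA X p \<rho> \<longrightarrow>
        P_guess dB X p (\<lambda>x. N (\<rho> x)) \<ge> P_guess dB' X p (\<lambda>x. N' (\<rho> x)))"

end

theory Submission
  imports Defs "HOL-Analysis.Function_Topology" "HOL-Analysis.Elementary_Metric_Spaces" "Jordan_Normal_Form.Determinant"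
begin

definition ip :: "nat \<Rightarrow> (nat \<Rightarrow> complex) \<Rightarrow> (nat \<Rightarrow> complex) \<Rightarrow> complex" where
  "ip n f g = (\<Sum>i<n. cnj (f i) * g i)"

definition mv :: "nat \<Rightarrow> complex mat \<Rightarrow> (nat \<Rightarrow> complex) \<Rightarrow> (nat \<Rightarrow> complex)" where
  "mv n M f = (\<lambda>i. if i < n then (\<Sum>j<n. M $$ (i,j) * f j) else 0)"

definition hf :: "nat \<Rightarrow> complex mat \<Rightarrow> (nat \<Rightarrow> complex) \<Rightarrow> complex" where
  "hf n M f = (\<Sum>i<n. \<Sum>j<n. cnj (f i) * M $$ (i,j) * f j)"

definition herm :: "nat \<Rightarrow> complex mat \<Rightarrow> bool" where
  "herm n M \<longleftrightarrow> M \<in> carrier_mat n n \<and> (\<forall>i<n. \<forall>j<n. M $$ (i,j) = cnj (M $$ (j,i)))"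

lemma cscalar_hf:
  assumes M: "M \<in> carrier_mat n n" and v: "v \<in> carrier_vec n"
  shows "v \<bullet>c (M *\<^sub>v v) = cnj (hf n M (\<lambda>i. v $ i))"
proof -
  have "v \<bullet>c (M *\<^sub>v v) = (\<Sum>i<n. v $ i * cnj (\<Sum>j<n. M $$ (i,j) * v $ j))"
    using M v by (auto simp: scalar_prod_def atLeast0LessThan intro!: sum.cong)
  also have "\<dots> = cnj (hf n M (\<lambda>i. v $ i))"
    unfolding hf_def cnj_sum by (simp add: sum_distrib_left mult.assoc mult.left_commute)
  finally show ?thesis .
qed

lemma hf_cong: "(\<And>i. i < n \<Longrightarrow> f i = g i) \<Longrightarrow> hf n M f = hf n M g"
  unfolding hf_def by (intro sum.cong) auto

lemma psd_iff: "psd n M \<longleftrightarrow> M \<in> carrier_mat n n \<and> (\<forall>f. Im (hf n M f) = 0 \<and> 0 \<le> Re (hf n M f))"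
proof
  assume p: "psd n M"
  hence M: "M \<in> carrier_mat n n" by (simp add: psd_def)
  show "M \<in> carrier_mat n n \<and> (\<forall>f. Im (hf n M f) = 0 \<and> 0 \<le> Re (hf n M f))"
  proof (intro conjI allI M)
    fix f :: "nat \<Rightarrow> complex"
    have v: "vec n f \<in> carrier_vec n" by simp
    have e: "hf n M (\<lambda>i. vec n f $ i) = hf n M f" by (rule hf_cong) simp
    from p v have "Im (vec n f \<bullet>c (M *\<^sub>v vec n f)) = 0 \<and> 0 \<le> Re (vec n f \<bullet>c (M *\<^sub>v vec n f))"
      by (simp add: psd_def)
    thus "Im (hf n M f) = 0" "0 \<le> Re (hf n M f)" using cscalar_hf[OF M v] e by auto
  qed
next
  assume a: "M \<in> carrier_mat n n \<and> (\<forall>f. Im (hf n M f) = 0 \<and> 0 \<le> Re (hf n M f))"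
  show "psd n M" unfolding psd_def
  proof (intro conjI ballI)
    show "M \<in> carrier_mat n n" using a by simp
    fix v :: "complex vec" assume v: "v \<in> carrier_vec n"
    from a have "Im (hf n M (\<lambda>i. v $ i)) = 0 \<and> 0 \<le> Re (hf n M (\<lambda>i. v $ i))" by blast
    thus "Im (v \<bullet>c (M *\<^sub>v v)) = 0" "0 \<le> Re (v \<bullet>c (M *\<^sub>v v))"
      using cscalar_hf[OF _ v, of M] a by auto
  qed
qed

lemma psdD: "psd n M \<Longrightarrow> Im (hf n M f) = 0" "psd n M \<Longrightarrow> 0 \<le> Re (hf n M f)"
  "psd n M \<Longrightarrow> M \<in> carrier_mat n n"
  by (auto simp: psd_iff)

lemma hf_ip: "hf n M f = ip n f (mv n M f)"
  unfolding hf_def ip_def mv_def by (simp add: sum_distrib_left mult.assoc)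

lemma sum_two:
  fixes g :: "nat \<Rightarrow> 'a::comm_monoid_add"
  assumes "i < n" "j < n" "i \<noteq> j" "\<And>k. k \<noteq> i \<Longrightarrow> k \<noteq> j \<Longrightarrow> g k = 0"
  shows "(\<Sum>k<n. g k) = g i + g j"
proof -
  have "(\<Sum>k<n. g k) = (\<Sum>k\<in>{i,j}. g k)"
    by (rule sum.mono_neutral_right) (use assms in auto)
  thus ?thesis using assms by simp
qed

lemma sum_one:
  fixes g :: "nat \<Rightarrow> 'a::comm_monoid_add"
  assumes "i < n" "\<And>k. k \<noteq> i \<Longrightarrow> g k = 0"
  shows "(\<Sum>k<n. g k) = g i"
proof -
  have "(\<Sum>k<n. g k) = (\<Sum>k\<in>{i}. g k)"
    by (rule sum.mono_neutral_right) (use assms in auto)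
  thus ?thesis using assms by simp
qed

lemma hf_two:
  assumes "i < n" "j < n" "i \<noteq> j"
  shows "hf n M (\<lambda>k. if k = i then a else if k = j then b else 0) =
    cnj a * M $$ (i,i) * a + cnj a * M $$ (i,j) * b + cnj b * M $$ (j,i) * a + cnj b * M $$ (j,j) * b"
proof -
  define f where "f = (\<lambda>k::nat. if k = i then a else if k = j then b else 0)"
  have inner: "(\<Sum>l<n. cnj (f k) * M $$ (k,l) * f l) = cnj (f k) * M $$ (k,i) * a + cnj (f k) * M $$ (k,j) * b" for k
    by (subst sum_two[OF assms]) (use assms in \<open>auto simp: f_def\<close>)
  have "hf n M f = (\<Sum>k<n. cnj (f k) * M $$ (k,i) * a + cnj (f k) * M $$ (k,j) * b)"
    unfolding hf_def inner ..
  also have "\<dots> = cnj a * M $$ (i,i) * a + cnj a * M $$ (i,j) * b + (cnj b * M $$ (j,i) * a + cnj b * M $$ (j,j) * b)"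
    by (subst sum_two[OF assms]) (use assms in \<open>auto simp: f_def\<close>)
  finally show ?thesis unfolding f_def by (simp add: add.assoc)
qed

lemma hf_one:
  assumes "i < n"
  shows "hf n M (\<lambda>k. if k = i then a else 0) = cnj a * M $$ (i,i) * a"
proof -
  define f where "f = (\<lambda>k::nat. if k = i then a else 0)"
  have inner: "(\<Sum>l<n. cnj (f k) * M $$ (k,l) * f l) = cnj (f k) * M $$ (k,i) * a" for k
    by (subst sum_one[OF assms]) (use assms in \<open>auto simp: f_def\<close>)
  have "hf n M f = (\<Sum>k<n. cnj (f k) * M $$ (k,i) * a)"
    unfolding hf_def inner ..
  also have "\<dots> = cnj a * M $$ (i,i) * a"
    by (subst sum_one[OF assms]) (use assms in \<open>auto simp: f_def\<close>)
  finally show ?thesis unfolding f_def .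
qed

lemma psd_herm: assumes p: "psd n M" shows "herm n M"
  unfolding herm_def
proof (intro conjI allI impI)
  show "M \<in> carrier_mat n n" using p by (simp add: psd_iff)
  fix i j assume i: "i < n" and j: "j < n"
  have ii: "Im (M $$ (i,i)) = 0" "Im (M $$ (j,j)) = 0"
    using psdD(1)[OF p, of "\<lambda>k. if k = i then 1 else 0"] hf_one[OF i, of M 1]
      psdD(1)[OF p, of "\<lambda>k. if k = j then 1 else 0"] hf_one[OF j, of M 1] by simp_all
  show "M $$ (i,j) = cnj (M $$ (j,i))"
  proof (cases "i = j")
    case True
    thus ?thesis using ii by (simp add: complex_eq_iff)
  next
    case False
    have "Im (hf n M (\<lambda>k. if k = i then 1 else if k = j then 1 else 0)) = 0" by (rule psdD(1)[OF p])
    hence a: "Im (M $$ (i,j)) + Im (M $$ (j,i)) = 0" using hf_two[OF i j False, of M 1 1] ii by simp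
    have "Im (hf n M (\<lambda>k. if k = i then 1 else if k = j then \<i> else 0)) = 0" by (rule psdD(1)[OF p])
    hence b: "Re (M $$ (i,j)) - Re (M $$ (j,i)) = 0" using hf_two[OF i j False, of M 1 \<i>] ii by simp
    show ?thesis using a b by (simp add: complex_eq_iff)
  qed
qed

lemma hermD: "herm n M \<Longrightarrow> i < n \<Longrightarrow> j < n \<Longrightarrow> cnj (M $$ (i,j)) = M $$ (j,i)"
  unfolding herm_def by (metis complex_cnj_cnj)

lemma herm_hf_real: assumes h: "herm n M" shows "Im (hf n M f) = 0"
proof -
  have "cnj (hf n M f) = (\<Sum>i<n. \<Sum>j<n. f i * cnj (M $$ (i,j)) * cnj (f j))"
    unfolding hf_def cnj_sum by simp
  also have "\<dots> = (\<Sum>i<n. \<Sum>j<n. f i * M $$ (j,i) * cnj (f j))"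
    by (intro sum.cong refl) (simp add: hermD[OF h])
  also have "\<dots> = (\<Sum>j<n. \<Sum>i<n. f i * M $$ (j,i) * cnj (f j))"
    by (rule sum.swap)
  also have "\<dots> = hf n M f" unfolding hf_def
    by (intro sum.cong refl) (simp add: mult.commute mult.left_commute)
  finally have "cnj (hf n M f) = hf n M f" .
  thus ?thesis by (metis Reals_cnj_iff complex_is_Real_iff)
qed

lemma herm_mv_sym: assumes h: "herm n M" shows "ip n f (mv n M g) = ip n (mv n M f) g"
proof -
  have "ip n f (mv n M g) = (\<Sum>i<n. \<Sum>j<n. cnj (f i) * M $$ (i,j) * g j)"
    unfolding ip_def mv_def by (simp add: sum_distrib_left mult.assoc)
  also have "\<dots> = (\<Sum>j<n. \<Sum>i<n. cnj (f i) * M $$ (i,j) * g j)" by (rule sum.swap)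
  also have "\<dots> = (\<Sum>j<n. \<Sum>i<n. cnj (f i) * cnj (M $$ (j,i)) * g j)"
    by (intro sum.cong refl) (simp add: hermD[OF h])
  also have "\<dots> = ip n (mv n M f) g"
    unfolding ip_def mv_def cnj_sum
    by (auto simp: sum_distrib_right sum_distrib_left mult.commute mult.left_commute intro!: sum.cong)
  finally show ?thesis .
qed

lemma ip_self_real: "Im (ip n f f) = 0" "0 \<le> Re (ip n f f)"
  "ip n f f = of_real (\<Sum>i<n. (cmod (f i))^2)"
proof -
  have e: "ip n f f = of_real (\<Sum>i<n. (cmod (f i))^2)"
    unfolding ip_def of_real_sum by (intro sum.cong refl) (simp add: complex_norm_square[symmetric] mult.commute)
  thus "ip n f f = of_real (\<Sum>i<n. (cmod (f i))^2)" .
  show "Im (ip n f f) = 0" "0 \<le> Re (ip n f f)" unfolding e by (auto intro: sum_nonneg)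
qed

lemma ip_self_zero: "Re (ip n f f) = 0 \<longleftrightarrow> (\<forall>i<n. f i = 0)"
proof -
  have "Re (ip n f f) = (\<Sum>i<n. (cmod (f i))^2)" using ip_self_real(3)[of n f] by simp
  thus ?thesis by (auto simp: sum_nonneg_eq_0_iff)
qed

lemma ip_lin_right: "ip n f (\<lambda>i. a * g i + b * h i) = a * ip n f g + b * ip n f h"
  unfolding ip_def by (simp add: sum.distrib sum_distrib_left algebra_simps)

lemma ip_lin_left: "ip n (\<lambda>i. a * g i + b * h i) f = cnj a * ip n g f + cnj b * ip n h f"
  unfolding ip_def by (simp add: sum.distrib sum_distrib_left algebra_simps)

lemma ip_cnj: "cnj (ip n f g) = ip n g f"
  unfolding ip_def cnj_sum by (simp add: mult.commute)

lemma mv_lin: "mv n M (\<lambda>i. a * g i + b * h i) = (\<lambda>i. a * mv n M g i + b * mv n M h i)"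
  unfolding mv_def by (auto simp: sum.distrib sum_distrib_left algebra_simps)

lemma mv_zero_out: "i \<ge> n \<Longrightarrow> mv n M f i = 0" unfolding mv_def by simp

lemma continuous_on_coord[continuous_intros]: "continuous_on S (\<lambda>x::'a \<Rightarrow> 'b::topological_space. x i)"
  by (rule continuous_on_subset[OF continuous_on_product_coordinates]) auto

lemma compact_box:
  fixes K :: "'i \<Rightarrow> 'b::topological_space set"
  assumes "\<And>i. compact (K i)"
  shows "compact {f. \<forall>i. f i \<in> K i}"
proof -
  have "compactin (product_topology (\<lambda>i. euclidean) UNIV) (PiE UNIV K)"
    using assms by (simp add: compactin_PiE)
  hence "compact (PiE UNIV K)" by (simp add: euclidean_product_topology)
  moreover have "PiE UNIV K = {f. \<forall>i. f i \<in> K i}" by (auto simp: PiE_iff)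
  ultimately show ?thesis by simp
qed

definition csq :: "complex set" where
  "csq = (\<lambda>p. Complex (fst p) (snd p)) ` ({-1..1} \<times> {-1..1})"

lemma compact_csq: "compact csq"
  unfolding csq_def
proof (rule compact_continuous_image)
  show "compact ({-1..1::real} \<times> {-1..1::real})" by (intro compact_Times compact_Icc)
  have "(\<lambda>p. Complex (fst p) (snd p)) = (\<lambda>p. complex_of_real (fst p) + \<i> * complex_of_real (snd p))"
    by (auto simp: complex_eq_iff)
  moreover have "continuous_on ({-1..1} \<times> {-1..1}) (\<lambda>p::real\<times>real. complex_of_real (fst p) + \<i> * complex_of_real (snd p))"
    by (intro continuous_intros)
  ultimately show "continuous_on ({-1..1} \<times> {-1..1}) (\<lambda>p. Complex (fst p) (snd p))"
    by metis
qed

lemma in_csq: "cmod z \<le> 1 \<Longrightarrow> z \<in> csq"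
proof -
  assume a: "cmod z \<le> 1"
  have "\<bar>Re z\<bar> \<le> 1" "\<bar>Im z\<bar> \<le> 1" using abs_Re_le_cmod abs_Im_le_cmod a by (blast intro: order_trans)+
  hence "(Re z, Im z) \<in> {-1..1} \<times> {-1..1}" by auto
  moreover have "z = Complex (fst (Re z, Im z)) (snd (Re z, Im z))" by simp
  ultimately show "z \<in> csq" unfolding csq_def by blast
qed


definition subsp :: "nat \<Rightarrow> (nat \<Rightarrow> complex) set \<Rightarrow> bool" where
  "subsp n W \<longleftrightarrow> closed W \<and> (\<forall>f\<in>W. \<forall>i\<ge>n. f i = 0) \<and>
     (\<forall>f\<in>W. \<forall>g\<in>W. \<forall>a b. (\<lambda>i. a * f i + b * g i) \<in> W)"

lemma ip_scale: "ip n (\<lambda>i. a * f i) (\<lambda>i. b * g i) = cnj a * b * ip n f g"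
  unfolding ip_def by (simp add: sum_distrib_left mult.commute mult.left_commute)

lemma hf_scale: "hf n K (\<lambda>i. a * f i) = cnj a * a * hf n K f"
  unfolding hf_def sum_distrib_left by (intro sum.cong refl) (simp add: algebra_simps)

lemma ip_add_right: "ip n f (\<lambda>i. g i + b * h i) = ip n f g + b * ip n f h"
  using ip_lin_right[of n f 1 g b h] by simp

lemma ip_add_left: "ip n (\<lambda>i. g i + b * h i) f = ip n g f + cnj b * ip n h f"
  using ip_lin_left[of n 1 g b h f] by simp

lemma ip_diff_right: "ip n f (\<lambda>i. g i - b * h i) = ip n f g - b * ip n f h"
  using ip_lin_right[of n f 1 g "-b" h] by simp

lemma hf_zero: "(\<And>i. i < n \<Longrightarrow> f i = 0) \<Longrightarrow> hf n K f = 0"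
  unfolding hf_def by simp

lemma quad_zero:
  fixes a b :: real
  assumes "\<And>t. 2 * t * a + t^2 * b \<le> 0"
  shows "a = 0"
proof -
  define s where "s = \<bar>b\<bar> + 1"
  have s: "s > 0" unfolding s_def by simp
  have "2 * (a/s) * a + (a/s)^2 * b \<le> 0" by (rule assms)
  hence "(2 * (a/s) * a + (a/s)^2 * b) * s^2 \<le> 0" using s
    by (simp add: mult_nonpos_nonneg)
  moreover have "a^2 * (2 * s + b) = (2 * (a/s) * a + (a/s)^2 * b) * s^2"
    using s by (simp add: field_simps power2_eq_square)
  ultimately have "a^2 * (2 * s + b) \<le> 0" by simp
  moreover have "2 * s + b > 0" unfolding s_def by (simp add: abs_if)
  ultimately have "a^2 \<le> 0" by (simp add: mult_le_0_iff)
  thus ?thesis by simp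
qed

lemma continuous_on_ip_self[continuous_intros]: "continuous_on S (\<lambda>f. ip n f f)"
  unfolding ip_def by (intro continuous_intros)

lemma continuous_on_hf[continuous_intros]: "continuous_on S (\<lambda>f. hf n K f)"
  unfolding hf_def by (intro continuous_intros)

lemma ip_one_nonzero: assumes "ip n x x = 1" shows "\<exists>i<n. x i \<noteq> 0"
  using ip_self_zero[of n x] assms by auto

lemma normalize:
  assumes W: "subsp n W" and f0: "f0 \<in> W" "i0 < n" "f0 i0 \<noteq> 0"
  shows "\<exists>x\<in>W. ip n x x = 1"
proof -
  define c where "c = sqrt (Re (ip n f0 f0))"
  have "Re (ip n f0 f0) \<noteq> 0" using ip_self_zero[of n f0] f0 by auto
  hence pos: "Re (ip n f0 f0) > 0" using ip_self_real(2)[of n f0] by linarith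
  hence c: "c > 0" "c^2 = Re (ip n f0 f0)" unfolding c_def by auto
  define x where "x = (\<lambda>i. complex_of_real (1/c) * f0 i + 0 * f0 i)"
  have "x \<in> W" using W f0 unfolding subsp_def x_def by blast
  moreover have "ip n x x = 1"
  proof -
    have xe: "x = (\<lambda>i. complex_of_real (1/c) * f0 i)" unfolding x_def by simp
    have "ip n x x = cnj (complex_of_real (1/c)) * complex_of_real (1/c) * ip n f0 f0"
      unfolding xe by (rule ip_scale)
    hence "ip n x x = complex_of_real (1/c) * complex_of_real (1/c) * ip n f0 f0" by simp
    also have "ip n f0 f0 = complex_of_real (c^2)"
      using c(2) ip_self_real(1)[of n f0] by (simp add: complex_eq_iff)
    finally show ?thesis using c by (simp add: power2_eq_square)
  qed
  ultimately show ?thesis by blast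
qed

lemma exists_eig:
  assumes K: "herm n K" and W: "subsp n W" and inv: "\<And>f. f \<in> W \<Longrightarrow> mv n K f \<in> W"
    and ne: "f0 \<in> W" "i0 < n" "f0 i0 \<noteq> 0"
  shows "\<exists>x\<in>W. ip n x x = 1 \<and> (\<exists>\<mu>::real. mv n K x = (\<lambda>i. complex_of_real \<mu> * x i))"
proof -
  have lin: "\<And>f g a b. f\<in>W \<Longrightarrow> g\<in>W \<Longrightarrow> (\<lambda>i. a*f i + b*g i) \<in> W" using W unfolding subsp_def by blast
  have zero: "\<And>f i. f \<in> W \<Longrightarrow> n \<le> i \<Longrightarrow> f i = 0" using W unfolding subsp_def by blast
  define S where "S = {f. \<forall>i. f i \<in> csq} \<inter> (W \<inter> {f. ip n f f = 1})"
  have "compact S" unfolding S_def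
  proof (rule compact_Int_closed)
    show "compact {f :: nat \<Rightarrow> complex. \<forall>i. f i \<in> csq}" by (rule compact_box) (rule compact_csq)
    show "closed (W \<inter> {f. ip n f f = 1})"
      using W unfolding subsp_def
      by (intro closed_Int closed_Collect_eq continuous_intros) auto
  qed
  have SW: "S = W \<inter> {f. ip n f f = 1}"
  proof -
    have "f i \<in> csq" if "f \<in> W" "ip n f f = 1" for f i
    proof (cases "i < n")
      case True
      have "(\<Sum>i<n. (cmod (f i))^2) = 1" using that(2) ip_self_real(3)[of n f] of_real_eq_1_iff by metis
      moreover have "(cmod (f i))^2 \<le> (\<Sum>i<n. (cmod (f i))^2)"
        by (rule member_le_sum) (use True in auto)
      ultimately have "(cmod (f i))^2 \<le> 1" by simp
      hence "cmod (f i) \<le> 1" by (simp add: power_le_one_iff abs_le_square_iff)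
      thus ?thesis by (rule in_csq)
    next
      case False thus ?thesis using zero[OF that(1)] in_csq[of 0] by simp
    qed
    thus ?thesis unfolding S_def by auto
  qed
  obtain x0 where "x0 \<in> W" "ip n x0 x0 = 1" using normalize[OF W ne] by blast
  hence Sne: "S \<noteq> {}" unfolding SW by auto
  have cont: "continuous_on S (\<lambda>f. Re (hf n K f))" by (intro continuous_intros)
  obtain x where xS: "x \<in> S" and xmax: "\<And>y. y \<in> S \<Longrightarrow> Re (hf n K y) \<le> Re (hf n K x)"
    using continuous_attains_sup[OF \<open>compact S\<close> Sne cont] by blast
  define \<mu> where "\<mu> = Re (hf n K x)"
  have xW: "x \<in> W" and xx: "ip n x x = 1" using xS unfolding SW by auto
  have claim1: "Re (hf n K g) \<le> \<mu> * Re (ip n g g)" if g: "g \<in> W" for g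
  proof (cases "Re (ip n g g) = 0")
    case True
    hence "hf n K g = 0" using ip_self_zero[of n g] by (intro hf_zero) auto
    thus ?thesis using True by simp
  next
    case False
    define c where "c = sqrt (Re (ip n g g))"
    have pos: "Re (ip n g g) > 0" using ip_self_real(2)[of n g] False by linarith
    hence c: "c > 0" "c^2 = Re (ip n g g)" unfolding c_def by auto
    have gg: "ip n g g = complex_of_real (c^2)"
      using c(2) ip_self_real(1)[of n g] by (simp add: complex_eq_iff)
    define y where "y = (\<lambda>i. complex_of_real (1/c) * g i)"
    have ye: "y = (\<lambda>i. complex_of_real (1/c) * g i + 0 * g i)" unfolding y_def by simp
    have yW: "y \<in> W" unfolding ye by (rule lin[OF g g])
    have "ip n y y = 1" unfolding y_def ip_scale gg using c pos by (simp add: power2_eq_square flip: of_real_mult)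
    hence "y \<in> S" using yW unfolding SW by auto
    hence "Re (hf n K y) \<le> \<mu>" using xmax unfolding \<mu>_def by blast
    moreover have "hf n K y = complex_of_real (1/c^2) * hf n K g"
      unfolding y_def hf_scale by (simp add: power2_eq_square)
    ultimately have "Re (hf n K g) / c^2 \<le> \<mu>" by simp
    hence "Re (hf n K g) \<le> \<mu> * c^2" using c pos by (simp add: divide_le_eq)
    thus ?thesis using c(2) by simp
  qed
  have claim2: "Re (ip n w (mv n K x)) - \<mu> * Re (ip n w x) = 0" if w: "w \<in> W" for w
  proof -
    define A where "A = Re (ip n w (mv n K x))"
    define B where "B = Re (hf n K w)"
    define C where "C = Re (ip n w x)"
    define D where "D = Re (ip n w w)"
    have "2 * t * (A - \<mu> * C) + t^2 * (B - \<mu> * D) \<le> 0" for t :: real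
    proof -
      define g where "g = (\<lambda>i. 1 * x i + complex_of_real t * w i)"
      have gW: "g \<in> W" unfolding g_def by (rule lin[OF xW w])
      have sym: "ip n x (mv n K w) = cnj (ip n w (mv n K x))"
        using herm_mv_sym[OF K, of x w] ip_cnj[of n w "mv n K x"] by simp
      have "hf n K g = ip n g (mv n K g)" by (rule hf_ip)
      also have "mv n K g = (\<lambda>i. 1 * mv n K x i + complex_of_real t * mv n K w i)"
        unfolding g_def by (rule mv_lin)
      also have "ip n g \<dots> = ip n g (mv n K x) + complex_of_real t * ip n g (mv n K w)"
        by (simp add: ip_lin_right ip_add_right ip_diff_right)
      also have "ip n g (mv n K x) = ip n x (mv n K x) + complex_of_real t * ip n w (mv n K x)"
        unfolding g_def by (simp add: ip_lin_left ip_add_left)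
      also have "ip n g (mv n K w) = ip n x (mv n K w) + complex_of_real t * ip n w (mv n K w)"
        unfolding g_def by (simp add: ip_lin_left ip_add_left)
      finally have "hf n K g = hf n K x + complex_of_real t * (ip n w (mv n K x) + cnj (ip n w (mv n K x)))
          + complex_of_real (t^2) * hf n K w"
        unfolding sym hf_ip by (simp add: algebra_simps power2_eq_square)
      hence hg: "Re (hf n K g) = \<mu> + 2 * t * A + t^2 * B"
        unfolding \<mu>_def A_def B_def by simp
      have "ip n g g = ip n g x + complex_of_real t * ip n g w"
        using ip_add_right[of n g x "complex_of_real t" w] unfolding g_def by simp
      also have "ip n g x = ip n x x + complex_of_real t * ip n w x"
        unfolding g_def by (simp add: ip_lin_left ip_add_left)
      also have "ip n g w = ip n x w + complex_of_real t * ip n w w"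
        unfolding g_def by (simp add: ip_lin_left ip_add_left)
      also have "ip n x w = cnj (ip n w x)" by (simp add: ip_cnj)
      finally have "ip n g g = ip n x x + complex_of_real t * (ip n w x + cnj (ip n w x))
          + complex_of_real (t^2) * ip n w w"
        by (simp add: algebra_simps power2_eq_square)
      hence gg: "Re (ip n g g) = 1 + 2 * t * C + t^2 * D" unfolding C_def D_def xx by simp
      have "\<mu> + 2 * t * A + t^2 * B \<le> \<mu> * (1 + 2 * t * C + t^2 * D)"
        using claim1[OF gW] hg gg by simp
      thus ?thesis by (simp add: algebra_simps)
    qed
    from quad_zero[OF this] show ?thesis unfolding A_def C_def by simp
  qed
  define w where "w = (\<lambda>i. 1 * mv n K x i + complex_of_real (- \<mu>) * x i)"
  have wW: "w \<in> W" unfolding w_def by (rule lin[OF inv[OF xW] xW])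
  have "ip n w w = ip n w (mv n K x) - complex_of_real \<mu> * ip n w x"
    by (subst (2) w_def) (simp add: ip_lin_right ip_add_right ip_diff_right)
  hence "Re (ip n w w) = 0" using claim2[OF wW] by simp
  hence w0: "\<forall>i<n. w i = 0" using ip_self_zero by blast
  have "mv n K x = (\<lambda>i. complex_of_real \<mu> * x i)"
  proof
    fix i show "mv n K x i = complex_of_real \<mu> * x i"
    proof (cases "i < n")
      case True thus ?thesis using w0 unfolding w_def by (simp add: algebra_simps)
    next
      case False thus ?thesis using zero[OF xW] mv_zero_out by simp
    qed
  qed
  thus ?thesis using xW xx by blast
qed


lemma index_mult':
  assumes "A \<in> carrier_mat n n" "B \<in> carrier_mat n n" "i < n" "k < n"
  shows "(A * B) $$ (i,k) = (\<Sum>j<n. A $$ (i,j) * B $$ (j,k))"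
  using assms by (simp add: scalar_prod_def atLeast0LessThan)

lemma mv_mult:
  assumes K: "K \<in> carrier_mat n n" and L: "L \<in> carrier_mat n n"
  shows "mv n K (mv n L f) = mv n (K * L) f"
proof
  fix i show "mv n K (mv n L f) i = mv n (K * L) f i"
  proof (cases "i < n")
    case True
    have "mv n K (mv n L f) i = (\<Sum>j<n. K $$ (i,j) * (\<Sum>k<n. L $$ (j,k) * f k))"
      using True unfolding mv_def by simp
    also have "\<dots> = (\<Sum>j<n. \<Sum>k<n. K $$ (i,j) * L $$ (j,k) * f k)"
      by (simp add: sum_distrib_left mult.assoc)
    also have "\<dots> = (\<Sum>k<n. \<Sum>j<n. K $$ (i,j) * L $$ (j,k) * f k)" by (rule sum.swap)
    also have "\<dots> = mv n (K * L) f i"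
      using True unfolding mv_def by (simp add: index_mult'[OF K L] sum_distrib_right)
    finally show ?thesis .
  qed (simp add: mv_def)
qed

lemma mv_scale: "mv n M (\<lambda>i. c * f i) = (\<lambda>i. c * mv n M f i)"
  using mv_lin[of n M c f 0 f] by simp

lemma ip_scale_left: "ip n (\<lambda>i. a * f i) g = cnj a * ip n f g"
  unfolding ip_def by (simp add: sum_distrib_left mult.assoc)

lemma closed_imp: "closed {x. P x} \<Longrightarrow> closed {x. c \<longrightarrow> P x}"
  by (cases c) auto

lemma continuous_on_mv[continuous_intros]: "continuous_on S (\<lambda>f. mv n K f i)"
  unfolding mv_def by (cases "i < n") (simp_all add: continuous_intros)

lemma continuous_on_ip_right[continuous_intros]: "continuous_on S (\<lambda>f. ip n g f)"
  unfolding ip_def by (intro continuous_intros)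

lemma common_eig:
  assumes fin: "finite Ks"
  shows "(\<forall>K\<in>Ks. herm n K) \<Longrightarrow> (\<forall>K\<in>Ks. \<forall>L\<in>Ks. K * L = L * K) \<Longrightarrow> subsp n W \<Longrightarrow>
    (\<forall>K\<in>Ks. \<forall>f\<in>W. mv n K f \<in> W) \<Longrightarrow> f0 \<in> W \<Longrightarrow> i0 < n \<Longrightarrow> f0 i0 \<noteq> 0 \<Longrightarrow>
    \<exists>x\<in>W. ip n x x = 1 \<and> (\<forall>K\<in>Ks. \<exists>\<mu>. mv n K x = (\<lambda>i. \<mu> * x i))"
  using fin
proof (induction Ks arbitrary: W f0 i0 rule: finite_induct)
  case empty
  thus ?case using normalize by blast
next
  case (insert K Ks)
  have hK: "herm n K" using insert by auto
  have Kc: "K \<in> carrier_mat n n" using hK by (simp add: herm_def)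
  obtain x \<mu> where xW: "x \<in> W" and xx: "ip n x x = 1" and xe: "mv n K x = (\<lambda>i. complex_of_real \<mu> * x i)"
    using exists_eig[OF hK insert.prems(3) _ insert.prems(5-7)] insert.prems(4) by blast
  define W' where "W' = W \<inter> {f. \<forall>i. mv n K f i = complex_of_real \<mu> * f i}"
  have W: "subsp n W" by fact
  have sW': "subsp n W'"
    unfolding subsp_def
  proof (intro conjI ballI allI)
    show "closed W'" unfolding W'_def using W unfolding subsp_def
      by (intro closed_Int closed_Collect_all closed_Collect_eq continuous_intros) auto
    show "\<And>f i. f \<in> W' \<Longrightarrow> n \<le> i \<longrightarrow> f i = 0" using W unfolding W'_def subsp_def by auto
    fix f g a b assume f: "f \<in> W'" and g: "g \<in> W'"
    show "(\<lambda>i. a * f i + b * g i) \<in> W'"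
      using f g W unfolding W'_def subsp_def by (auto simp: mv_lin algebra_simps)
  qed
  have inv': "\<forall>L\<in>Ks. \<forall>f\<in>W'. mv n L f \<in> W'"
  proof (intro ballI)
    fix L f assume L: "L \<in> Ks" and f: "f \<in> W'"
    have Lc: "L \<in> carrier_mat n n" using insert.prems(1) L by (simp add: herm_def)
    have "mv n L f \<in> W" using insert.prems(4) L f unfolding W'_def by auto
    moreover have "mv n K (mv n L f) = mv n L (mv n K f)"
    proof -
      have c: "K * L = L * K" using insert.prems(2) L by blast
      have "mv n K (mv n L f) = mv n (K * L) f" by (rule mv_mult[OF Kc Lc])
      also have "\<dots> = mv n (L * K) f" unfolding c ..
      also have "\<dots> = mv n L (mv n K f)" by (rule mv_mult[OF Lc Kc, symmetric])
      finally show ?thesis .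
    qed
    moreover have "mv n K f = (\<lambda>i. complex_of_real \<mu> * f i)" using f unfolding W'_def by auto
    ultimately show "mv n L f \<in> W'" unfolding W'_def by (simp add: mv_scale)
  qed
  have xW': "x \<in> W'" using xW xe unfolding W'_def by simp
  obtain i1 where i1: "i1 < n" "x i1 \<noteq> 0" using ip_one_nonzero[OF xx] by blast
  obtain y where yW': "y \<in> W'" and yy: "ip n y y = 1" and ye: "\<forall>L\<in>Ks. \<exists>\<mu>. mv n L y = (\<lambda>i. \<mu> * y i)"
    using insert.IH[OF _ _ sW' inv' xW' i1] insert.prems(1,2) by blast
  have "mv n K y = (\<lambda>i. complex_of_real \<mu> * y i)" using yW' unfolding W'_def by auto
  hence "\<forall>L\<in>insert K Ks. \<exists>\<mu>. mv n L y = (\<lambda>i. \<mu> * y i)" using ye by blast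
  thus ?case using yW' yy unfolding W'_def by blast
qed

definition onb :: "nat \<Rightarrow> nat \<Rightarrow> (nat \<Rightarrow> nat \<Rightarrow> complex) \<Rightarrow> bool" where
  "onb n k u \<longleftrightarrow> (\<forall>l<k. \<forall>i\<ge>n. u l i = 0) \<and> (\<forall>l<k. \<forall>m<k. ip n (u l) (u m) = (if l = m then 1 else 0))"

lemma onb_k:
  assumes fin: "finite Ks" and hs: "\<forall>K\<in>Ks. herm n K" and cm: "\<forall>K\<in>Ks. \<forall>L\<in>Ks. K * L = L * K"
  shows "k \<le> n \<Longrightarrow> \<exists>u. onb n k u \<and> (\<forall>l<k. \<forall>K\<in>Ks. \<exists>\<mu>. mv n K (u l) = (\<lambda>i. \<mu> * u l i))"
proof (induction k)
  case 0 thus ?case by (simp add: onb_def)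
next
  case (Suc k)
  hence kn: "k < n" by simp
  obtain u where on: "onb n k u" and ev: "\<forall>l<k. \<forall>K\<in>Ks. \<exists>\<mu>. mv n K (u l) = (\<lambda>i. \<mu> * u l i)"
    using Suc by auto
  define W where "W = {f. (\<forall>i. n \<le> i \<longrightarrow> f i = 0) \<and> (\<forall>l. l < k \<longrightarrow> ip n (u l) f = 0)}"
  have sW: "subsp n W" unfolding subsp_def
  proof (intro conjI ballI allI)
    show "closed W" unfolding W_def
      by (intro closed_Collect_conj closed_Collect_all closed_imp closed_Collect_eq continuous_intros)
    show "\<And>f i. f \<in> W \<Longrightarrow> n \<le> i \<longrightarrow> f i = 0" unfolding W_def by auto
    fix f g a b assume "f \<in> W" "g \<in> W"
    thus "(\<lambda>i. a * f i + b * g i) \<in> W" unfolding W_def by (auto simp: ip_lin_right)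
  qed
  have inv: "\<forall>K\<in>Ks. \<forall>f\<in>W. mv n K f \<in> W"
  proof (intro ballI)
    fix K f assume K: "K \<in> Ks" and f: "f \<in> W"
    have "ip n (u l) (mv n K f) = 0" if l: "l < k" for l
    proof -
      obtain \<mu> where m: "mv n K (u l) = (\<lambda>i. \<mu> * u l i)" using ev l K by blast
      have "ip n (u l) (mv n K f) = ip n (mv n K (u l)) f" using hs K herm_mv_sym by blast
      also have "\<dots> = cnj \<mu> * ip n (u l) f" unfolding m ip_scale_left ..
      finally show ?thesis using f l unfolding W_def by simp
    qed
    thus "mv n K f \<in> W" unfolding W_def by (auto simp: mv_zero_out)
  qed
  define xx where "xx i = (\<lambda>m. if m < n then (if m = i then 1 else 0) - (\<Sum>l<k. cnj (u l i) * u l m) else 0)" for i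
  have xxW: "xx i \<in> W" if i: "i < n" for i
  proof -
    have "ip n (u l') (xx i) = 0" if l': "l' < k" for l'
    proof -
      have "ip n (u l') (xx i) = (\<Sum>m<n. cnj (u l' m) * (if m = i then 1 else 0)) -
          (\<Sum>m<n. \<Sum>l<k. cnj (u l i) * (cnj (u l' m) * u l m))"
        unfolding ip_def xx_def
        by (simp add: sum_subtractf[symmetric] sum_distrib_left right_diff_distrib mult.left_commute)
      also have "(\<Sum>m<n. cnj (u l' m) * (if m = i then 1 else 0)) = cnj (u l' i)"
        using i by (simp add: if_distrib cong: if_cong)
      also have "(\<Sum>m<n. \<Sum>l<k. cnj (u l i) * (cnj (u l' m) * u l m)) =
           (\<Sum>l<k. cnj (u l i) * ip n (u l') (u l))"
        unfolding ip_def by (subst sum.swap) (simp add: sum_distrib_left)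
      also have "\<dots> = (\<Sum>l<k. cnj (u l i) * (if l' = l then 1 else 0))"
        using on l' unfolding onb_def by (intro sum.cong refl) auto
      also have "\<dots> = cnj (u l' i)" using l' by (simp add: if_distrib cong: if_cong)
      finally show ?thesis by simp
    qed
    thus ?thesis unfolding W_def xx_def by auto
  qed
  have "\<exists>i<n. \<exists>m<n. xx i m \<noteq> 0"
  proof (rule ccontr)
    assume "\<not> ?thesis"
    hence z: "\<forall>i<n. xx i i = 0" by auto
    have "\<forall>i<n. (\<Sum>l<k. cnj (u l i) * u l i) = 1"
      using z unfolding xx_def by auto
    hence "(\<Sum>i<n. \<Sum>l<k. cnj (u l i) * u l i) = (\<Sum>i<n. (1::complex))" by simp
    also have "(\<Sum>i<n. \<Sum>l<k. cnj (u l i) * u l i) = (\<Sum>l<k. ip n (u l) (u l))"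
      unfolding ip_def by (rule sum.swap)
    also have "\<dots> = (\<Sum>l<k. (1::complex))" using on unfolding onb_def by simp
    finally have "of_nat k = (of_nat n :: complex)" by simp
    thus False using kn by simp
  qed
  then obtain i m where im: "i < n" "m < n" "xx i m \<noteq> 0" by blast
  obtain y where yW: "y \<in> W" and yy: "ip n y y = 1" and ye: "\<forall>K\<in>Ks. \<exists>\<mu>. mv n K y = (\<lambda>i. \<mu> * y i)"
    using common_eig[OF fin hs cm sW inv xxW[OF im(1)] im(2,3)] by blast
  define u' where "u' = u(k := y)"
  have "onb n (Suc k) u'"
    unfolding onb_def
  proof (intro conjI allI impI)
    fix l i assume "l < Suc k" "n \<le> i"
    thus "u' l i = 0" using on yW unfolding onb_def W_def u'_def by (cases "l = k") auto
  next
    fix l m assume l: "l < Suc k" and m: "m < Suc k"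
    have y0: "ip n (u l) y = 0" if "l < k" for l using yW that unfolding W_def by auto
    have y0': "ip n y (u l) = 0" if "l < k" for l using y0[OF that] ip_cnj[of n "u l" y] by simp
    show "ip n (u' l) (u' m) = (if l = m then 1 else 0)"
      using l m on y0 y0' yy unfolding u'_def onb_def by (cases "l = k"; cases "m = k") auto
  qed
  moreover have "\<forall>l<Suc k. \<forall>K\<in>Ks. \<exists>\<mu>. mv n K (u' l) = (\<lambda>i. \<mu> * u' l i)"
    using ev ye unfolding u'_def by (auto simp: less_Suc_eq)
  ultimately show ?case by blast
qed

lemma onb_complete:
  assumes on: "onb n n u" and i: "i < n" and j: "j < n"
  shows "(\<Sum>l<n. u l i * cnj (u l j)) = (if i = j then 1 else 0)"
proof -
  define U where "U = mat n n (\<lambda>(i,l). u l i)"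
  define V where "V = mat n n (\<lambda>(l,i). cnj (u l i))"
  have U: "U \<in> carrier_mat n n" and V: "V \<in> carrier_mat n n" unfolding U_def V_def by auto
  have "V * U = 1\<^sub>m n"
  proof (rule eq_matI)
    fix l m assume "l < dim_row (1\<^sub>m n)" "m < dim_col (1\<^sub>m n)"
    hence lm: "l < n" "m < n" by auto
    have "(V * U) $$ (l,m) = (\<Sum>i<n. V $$ (l,i) * U $$ (i,m))" by (rule index_mult'[OF V U lm])
    also have "\<dots> = (\<Sum>i<n. cnj (u l i) * u m i)"
      using lm by (intro sum.cong refl) (simp add: V_def U_def)
    also have "\<dots> = ip n (u l) (u m)" unfolding ip_def ..
    finally show "(V * U) $$ (l,m) = 1\<^sub>m n $$ (l,m)" using on lm unfolding onb_def by simp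
  qed (use U V in auto)
  hence "U * V = 1\<^sub>m n" by (rule mat_mult_left_right_inverse[OF V U])
  hence "(U * V) $$ (i,j) = (if i = j then 1 else 0)" using i j by simp
  moreover have "(U * V) $$ (i,j) = (\<Sum>l<n. U $$ (i,l) * V $$ (l,j))" by (rule index_mult'[OF U V i j])
  moreover have "\<dots> = (\<Sum>l<n. u l i * cnj (u l j))"
    using i j by (intro sum.cong refl) (simp add: V_def U_def)
  ultimately show ?thesis by simp
qed

lemma onb_exists:
  assumes "finite Ks" "\<forall>K\<in>Ks. herm n K" "\<forall>K\<in>Ks. \<forall>L\<in>Ks. K * L = L * K"
  shows "\<exists>u. onb n n u \<and> (\<forall>l<n. \<forall>K\<in>Ks. \<exists>\<mu>. mv n K (u l) = (\<lambda>i. \<mu> * u l i))"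
  using onb_k[OF assms, of n] by simp

lemma spectral:
  assumes on: "onb n n u" and K: "K \<in> carrier_mat n n" and ev: "\<And>l. l < n \<Longrightarrow> mv n K (u l) = (\<lambda>i. \<mu> l * u l i)"
    and i: "i < n" and j: "j < n"
  shows "K $$ (i,j) = (\<Sum>l<n. \<mu> l * u l i * cnj (u l j))"
proof -
  have "K $$ (i,j) = (\<Sum>m<n. K $$ (i,m) * (if m = j then 1 else 0))"
    using j by (simp add: if_distrib cong: if_cong)
  also have "\<dots> = (\<Sum>m<n. K $$ (i,m) * (\<Sum>l<n. u l m * cnj (u l j)))"
    using onb_complete[OF on _ j] by (intro sum.cong refl) simp
  also have "\<dots> = (\<Sum>l<n. (\<Sum>m<n. K $$ (i,m) * u l m) * cnj (u l j))"
    by (simp add: sum_distrib_left sum_distrib_right mult.assoc) (rule sum.swap)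
  also have "\<dots> = (\<Sum>l<n. mv n K (u l) i * cnj (u l j))"
    using i unfolding mv_def by simp
  also have "\<dots> = (\<Sum>l<n. \<mu> l * u l i * cnj (u l j))"
    using ev by simp
  finally show ?thesis .
qed

lemma psd_decomp:
  assumes p: "psd n Q"
  shows "\<exists>u \<mu>. onb n n u \<and> (\<forall>l<n. 0 \<le> \<mu> l) \<and>
    (\<forall>i<n. \<forall>j<n. Q $$ (i,j) = (\<Sum>l<n. complex_of_real (\<mu> l) * u l i * cnj (u l j)))"
proof -
  have h: "herm n Q" by (rule psd_herm[OF p])
  obtain u where on: "onb n n u" and ev: "\<forall>l<n. \<exists>\<mu>. mv n Q (u l) = (\<lambda>i. \<mu> * u l i)"
    using onb_exists[of "{Q}" n] h by auto
  obtain \<mu> where m: "\<And>l. l < n \<Longrightarrow> mv n Q (u l) = (\<lambda>i. \<mu> l * u l i)"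
    using ev by metis
  have hfv: "hf n Q (u l) = \<mu> l" if l: "l < n" for l
  proof -
    have "hf n Q (u l) = ip n (u l) (\<lambda>i. \<mu> l * u l i)" unfolding hf_ip m[OF l] ..
    also have "\<dots> = \<mu> l * ip n (u l) (u l)" unfolding ip_def by (simp add: sum_distrib_left mult.left_commute)
    finally show ?thesis using on l unfolding onb_def by simp
  qed
  define r where "r l = Re (\<mu> l)" for l
  have mr: "\<mu> l = complex_of_real (r l)" if "l < n" for l
    using hfv[OF that] psdD(1)[OF p, of "u l"] unfolding r_def by (simp add: complex_eq_iff)
  have rpos: "0 \<le> r l" if "l < n" for l using hfv[OF that] psdD(2)[OF p, of "u l"] unfolding r_def by simp
  have "Q $$ (i,j) = (\<Sum>l<n. complex_of_real (r l) * u l i * cnj (u l j))" if "i < n" "j < n" for i j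
    using spectral[OF on psdD(3)[OF p] m that] mr by (auto intro: sum.cong)
  thus ?thesis using on rpos by blast
qed


definition tp :: "nat \<Rightarrow> complex mat \<Rightarrow> complex mat \<Rightarrow> complex" where
  "tp n A B = (\<Sum>i<n. \<Sum>j<n. A $$ (i,j) * B $$ (j,i))"

definition E :: "nat \<Rightarrow> nat \<times> nat \<Rightarrow> complex mat" where
  "E n p = mat n n (\<lambda>q. if q = p then 1 else 0)"

definition rk :: "nat \<Rightarrow> (nat \<Rightarrow> complex) \<Rightarrow> complex mat" where
  "rk n f = mat n n (\<lambda>(i,j). f i * cnj (f j))"

lemma E_carrier[simp]: "E n p \<in> carrier_mat n n" unfolding E_def by simp
lemma rk_carrier[simp]: "rk n f \<in> carrier_mat n n" unfolding rk_def by simp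

lemma mtrace_carrier: "M \<in> carrier_mat n n \<Longrightarrow> mtrace M = (\<Sum>i<n. M $$ (i,i))"
  unfolding mtrace_def by simp

lemma mtrace_mult: "A \<in> carrier_mat n n \<Longrightarrow> B \<in> carrier_mat n n \<Longrightarrow> mtrace (A * B) = tp n A B"
proof -
  assume A: "A \<in> carrier_mat n n" and B: "B \<in> carrier_mat n n"
  have "mtrace (A * B) = (\<Sum>i<n. (A * B) $$ (i,i))" by (rule mtrace_carrier) (use A B in simp)
  also have "\<dots> = tp n A B" unfolding tp_def by (intro sum.cong refl) (simp add: index_mult'[OF A B])
  finally show ?thesis .
qed

lemma tp_comm: "tp n A B = tp n B A"
  unfolding tp_def by (subst sum.swap) (simp add: mult.commute)

lemma tp_one: "tp n (1\<^sub>m n) B = (\<Sum>i<n. B $$ (i,i))"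
proof -
  have "tp n (1\<^sub>m n) B = (\<Sum>i<n. \<Sum>j<n. if i = j then B $$ (j,i) else 0)"
    unfolding tp_def by (intro sum.cong refl) simp
  also have "\<dots> = (\<Sum>i<n. B $$ (i,i))" by simp
  finally show ?thesis .
qed

lemma hf_as_tp: "hf n A f = tp n A (rk n f)"
  unfolding hf_def tp_def rk_def
  by (intro sum.cong refl) (simp add: mult.commute mult.left_commute)

lemma psd_rk: "psd n (rk n f)"
  unfolding psd_iff
proof (intro conjI allI rk_carrier)
  fix g
  have "hf n (rk n f) g = (\<Sum>i<n. cnj (g i) * f i) * (\<Sum>j<n. cnj (f j) * g j)"
    unfolding hf_def rk_def by (simp add: sum_product mult.commute mult.left_commute)
  also have "\<dots> = ip n g f * cnj (ip n g f)" unfolding ip_def cnj_sum by (simp add: mult.commute)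
  also have "\<dots> = complex_of_real ((cmod (ip n g f))^2)" by (rule complex_norm_square[symmetric])
  finally have e: "hf n (rk n f) g = complex_of_real ((cmod (ip n g f))^2)" .
  show "Im (hf n (rk n f) g) = 0" "0 \<le> Re (hf n (rk n f) g)" unfolding e by simp_all
qed

lemma sum_real_nonneg:
  fixes g :: "'a \<Rightarrow> complex"
  assumes "\<And>x. x \<in> S \<Longrightarrow> Im (g x) = 0 \<and> 0 \<le> Re (g x)"
  shows "Im (sum g S) = 0 \<and> 0 \<le> Re (sum g S)"
  using assms by (simp add: Im_sum Re_sum sum_nonneg)

lemma tp_psd:
  assumes P: "psd n P" and Q: "psd n Q"
  shows "Im (tp n P Q) = 0 \<and> 0 \<le> Re (tp n P Q)"
proof -
  obtain u r where on: "onb n n u" and r: "\<forall>l<n. 0 \<le> r l"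
    and Qe: "\<forall>i<n. \<forall>j<n. Q $$ (i,j) = (\<Sum>l<n. complex_of_real (r l) * u l i * cnj (u l j))"
    using psd_decomp[OF Q] by blast
  have "tp n P Q = (\<Sum>i<n. \<Sum>j<n. P $$ (i,j) * (\<Sum>l<n. complex_of_real (r l) * u l j * cnj (u l i)))"
    unfolding tp_def using Qe by (intro sum.cong refl) simp
  also have "\<dots> = (\<Sum>i<n. \<Sum>j<n. \<Sum>l<n. complex_of_real (r l) * (cnj (u l i) * P $$ (i,j) * u l j))"
    by (intro sum.cong refl) (simp add: sum_distrib_left mult_ac)
  also have "\<dots> = (\<Sum>i<n. \<Sum>l<n. \<Sum>j<n. complex_of_real (r l) * (cnj (u l i) * P $$ (i,j) * u l j))"
    by (rule sum.cong[OF refl], rule sum.swap)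
  also have "\<dots> = (\<Sum>l<n. \<Sum>i<n. \<Sum>j<n. complex_of_real (r l) * (cnj (u l i) * P $$ (i,j) * u l j))"
    by (rule sum.swap)
  also have "\<dots> = (\<Sum>l<n. complex_of_real (r l) * hf n P (u l))"
    unfolding hf_def by (simp add: sum_distrib_left)
  finally have e: "tp n P Q = (\<Sum>l<n. complex_of_real (r l) * hf n P (u l))" .
  show ?thesis unfolding e
    by (rule sum_real_nonneg) (use r psdD(1,2)[OF P] in auto)
qed

lemma lin_carrier: "lin_map dA dB N \<Longrightarrow> X \<in> carrier_mat dA dA \<Longrightarrow> N X \<in> carrier_mat dB dB"
  unfolding lin_map_def by blast

lemma lin_comb: "lin_map dA dB N \<Longrightarrow> X \<in> carrier_mat dA dA \<Longrightarrow> Y \<in> carrier_mat dA dA \<Longrightarrow>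
   N (a \<cdot>\<^sub>m X + b \<cdot>\<^sub>m Y) = a \<cdot>\<^sub>m N X + b \<cdot>\<^sub>m N Y"
  unfolding lin_map_def by blast

lemma lin_zero:
  assumes L: "lin_map dA dB N"
  shows "N (mat dA dA (\<lambda>_. 0)) = mat dB dB (\<lambda>_. 0)"
proof -
  have Z: "mat dA dA (\<lambda>_. 0) \<in> carrier_mat dA dA" by simp
  have "mat dA dA (\<lambda>_. 0::complex) = 0 \<cdot>\<^sub>m mat dA dA (\<lambda>_. 0) + 0 \<cdot>\<^sub>m mat dA dA (\<lambda>_. 0)" by (rule eq_matI) auto
  hence "N (mat dA dA (\<lambda>_. 0)) = 0 \<cdot>\<^sub>m N (mat dA dA (\<lambda>_. 0)) + 0 \<cdot>\<^sub>m N (mat dA dA (\<lambda>_. 0))"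
    using lin_comb[OF L Z Z] by metis
  also have "\<dots> = mat dB dB (\<lambda>_. 0)" using lin_carrier[OF L Z] by (intro eq_matI) auto
  finally show ?thesis .
qed

lemma lin_sum:
  assumes L: "lin_map dA dB N" and fin: "finite T"
  shows "(\<forall>t\<in>T. X t \<in> carrier_mat dA dA) \<Longrightarrow>
    N (mat dA dA (\<lambda>q. \<Sum>t\<in>T. c t * X t $$ q)) = mat dB dB (\<lambda>q. \<Sum>t\<in>T. c t * N (X t) $$ q)"
  using fin
proof (induction T rule: finite_induct)
  case empty
  show ?case using lin_zero[OF L] by simp
next
  case (insert t T)
  define M where "M = mat dA dA (\<lambda>q. \<Sum>t\<in>T. c t * X t $$ q)"
  have M: "M \<in> carrier_mat dA dA" unfolding M_def by simp
  have Xt: "X t \<in> carrier_mat dA dA" using insert by simp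
  have "mat dA dA (\<lambda>q. \<Sum>t\<in>insert t T. c t * X t $$ q) = c t \<cdot>\<^sub>m X t + 1 \<cdot>\<^sub>m M"
    using insert(1,2) Xt unfolding M_def by (intro eq_matI) auto
  hence "N (mat dA dA (\<lambda>q. \<Sum>t\<in>insert t T. c t * X t $$ q)) = c t \<cdot>\<^sub>m N (X t) + 1 \<cdot>\<^sub>m N M"
    using lin_comb[OF L Xt M] by simp
  also have "N M = mat dB dB (\<lambda>q. \<Sum>t\<in>T. c t * N (X t) $$ q)" unfolding M_def using insert by simp
  also have "c t \<cdot>\<^sub>m N (X t) + 1 \<cdot>\<^sub>m mat dB dB (\<lambda>q. \<Sum>t\<in>T. c t * N (X t) $$ q) =
     mat dB dB (\<lambda>q. \<Sum>t\<in>insert t T. c t * N (X t) $$ q)"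
    using insert(1,2) lin_carrier[OF L Xt] by (intro eq_matI) auto
  finally show ?case .
qed

definition pairs :: "nat \<Rightarrow> (nat \<times> nat) set" where "pairs n = {..<n} \<times> {..<n}"

lemma finite_pairs[simp]: "finite (pairs n)" unfolding pairs_def by simp

lemma expand_mat:
  assumes X: "X \<in> carrier_mat n n"
  shows "X = mat n n (\<lambda>q. \<Sum>p\<in>pairs n. X $$ p * E n p $$ q)"
proof (rule eq_matI)
  fix i j assume "i < dim_row (mat n n (\<lambda>q. \<Sum>p\<in>pairs n. X $$ p * E n p $$ q))"
    "j < dim_col (mat n n (\<lambda>q. \<Sum>p\<in>pairs n. X $$ p * E n p $$ q))"
  hence ij: "i < n" "j < n" by auto
  have "(\<Sum>p\<in>pairs n. X $$ p * E n p $$ (i,j)) = (\<Sum>p\<in>pairs n. if (i,j) = p then X $$ p else 0)"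
    using ij unfolding E_def pairs_def by (intro sum.cong refl) auto
  also have "\<dots> = X $$ (i,j)" using ij by (simp add: pairs_def)
  finally show "X $$ (i,j) = mat n n (\<lambda>q. \<Sum>p\<in>pairs n. X $$ p * E n p $$ q) $$ (i,j)" using ij by simp
qed (use X in auto)

lemma lin_expand:
  assumes L: "lin_map dA dB N" and X: "X \<in> carrier_mat dA dA"
  shows "N X = mat dB dB (\<lambda>q. \<Sum>p\<in>pairs dA. X $$ p * N (E dA p) $$ q)"
  using lin_sum[OF L finite_pairs[of dA], where X = "E dA" and c = "\<lambda>p. X $$ p"] expand_mat[OF X] by simp

lemma lin_smult: "lin_map dA dB N \<Longrightarrow> X \<in> carrier_mat dA dA \<Longrightarrow> N (a \<cdot>\<^sub>m X) = a \<cdot>\<^sub>m N X"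
proof -
  assume L: "lin_map dA dB N" and X: "X \<in> carrier_mat dA dA"
  have "a \<cdot>\<^sub>m X = a \<cdot>\<^sub>m X + 0 \<cdot>\<^sub>m X" using X by (intro eq_matI) auto
  hence "N (a \<cdot>\<^sub>m X) = a \<cdot>\<^sub>m N X + 0 \<cdot>\<^sub>m N X" using lin_comb[OF L X X] by metis
  also have "\<dots> = a \<cdot>\<^sub>m N X" using lin_carrier[OF L X] by (intro eq_matI) auto
  finally show ?thesis .
qed

lemma ampliate_1:
  assumes L: "lin_map dA dB N" and X: "X \<in> carrier_mat dA dA"
  shows "ampliate 1 dA dB N X = N X"
proof -
  have b: "block dA X 0 0 = X" using X unfolding block_def by (intro eq_matI) auto
  show ?thesis unfolding ampliate_def using lin_carrier[OF L X]
    by (intro eq_matI) (auto simp: b)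
qed

lemma cp_pos: "CPTP dA dB N \<Longrightarrow> psd dA X \<Longrightarrow> psd dB (N X)"
proof -
  assume C: "CPTP dA dB N" and X: "psd dA X"
  hence L: "lin_map dA dB N" and cp: "completely_positive dA dB N" by (auto simp: CPTP_def)
  have "psd (1 * dB) (ampliate 1 dA dB N X)" using cp X unfolding completely_positive_def by (metis mult_1)
  hence "psd dB (ampliate 1 dA dB N X)" by (metis mult_1)
  thus ?thesis using ampliate_1[OF L psdD(3)[OF X]] by simp
qed

lemma cp_density: "CPTP dA dB N \<Longrightarrow> density dA X \<Longrightarrow> density dB (N X)"
  unfolding density_def CPTP_def trace_preserving_def
  using cp_pos[unfolded CPTP_def trace_preserving_def] psdD(3) by metis

definition adj :: "nat \<Rightarrow> nat \<Rightarrow> (complex mat \<Rightarrow> complex mat) \<Rightarrow> complex mat \<Rightarrow> complex mat" where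
  "adj dA dB N Y = mat dA dA (\<lambda>(a,b). tp dB Y (N (E dA (b,a))))"

lemma adj_carrier[simp]: "adj dA dB N Y \<in> carrier_mat dA dA" unfolding adj_def by simp

lemma tp_expand_right:
  assumes L: "lin_map dA dB N" and X: "X \<in> carrier_mat dA dA"
  shows "tp dB Y (N X) = (\<Sum>p\<in>pairs dA. X $$ p * tp dB Y (N (E dA p)))"
proof -
  have "tp dB Y (N X) = (\<Sum>i<dB. \<Sum>j<dB. Y $$ (i,j) * (\<Sum>p\<in>pairs dA. X $$ p * N (E dA p) $$ (j,i)))"
    unfolding tp_def by (subst lin_expand[OF L X]) simp
  also have "\<dots> = (\<Sum>i<dB. \<Sum>j<dB. \<Sum>p\<in>pairs dA. X $$ p * (Y $$ (i,j) * N (E dA p) $$ (j,i)))"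
    by (simp add: sum_distrib_left mult.left_commute)
  also have "\<dots> = (\<Sum>i<dB. \<Sum>p\<in>pairs dA. \<Sum>j<dB. X $$ p * (Y $$ (i,j) * N (E dA p) $$ (j,i)))"
    by (rule sum.cong[OF refl], rule sum.swap)
  also have "\<dots> = (\<Sum>p\<in>pairs dA. \<Sum>i<dB. \<Sum>j<dB. X $$ p * (Y $$ (i,j) * N (E dA p) $$ (j,i)))"
    by (rule sum.swap)
  also have "\<dots> = (\<Sum>p\<in>pairs dA. X $$ p * tp dB Y (N (E dA p)))"
    unfolding tp_def by (simp add: sum_distrib_left)
  finally show ?thesis .
qed

lemma adj_tp:
  assumes L: "lin_map dA dB N" and X: "X \<in> carrier_mat dA dA"
  shows "tp dA (adj dA dB N Y) X = tp dB Y (N X)"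
proof -
  have "tp dA (adj dA dB N Y) X = (\<Sum>a<dA. \<Sum>b<dA. tp dB Y (N (E dA (b,a))) * X $$ (b,a))"
    unfolding tp_def adj_def by (intro sum.cong refl) simp
  also have "\<dots> = (\<Sum>b<dA. \<Sum>a<dA. X $$ (b,a) * tp dB Y (N (E dA (b,a))))"
    by (subst sum.swap) (simp add: mult.commute)
  also have "\<dots> = (\<Sum>p\<in>pairs dA. X $$ p * tp dB Y (N (E dA p)))"
    unfolding pairs_def sum.cartesian_product' ..
  also have "\<dots> = tp dB Y (N X)" by (rule tp_expand_right[OF L X, symmetric])
  finally show ?thesis .
qed

lemma adj_psd:
  assumes C: "CPTP dA dB N" and Y: "psd dB Y"
  shows "psd dA (adj dA dB N Y)"
  unfolding psd_iff
proof (intro conjI allI adj_carrier)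
  fix f
  have L: "lin_map dA dB N" using C by (simp add: CPTP_def)
  have "hf dA (adj dA dB N Y) f = tp dA (adj dA dB N Y) (rk dA f)" by (rule hf_as_tp)
  also have "\<dots> = tp dB Y (N (rk dA f))" by (rule adj_tp[OF L rk_carrier])
  finally have e: "hf dA (adj dA dB N Y) f = tp dB Y (N (rk dA f))" .
  have "psd dB (N (rk dA f))" by (rule cp_pos[OF C psd_rk])
  from tp_psd[OF Y this] show "Im (hf dA (adj dA dB N Y) f) = 0" "0 \<le> Re (hf dA (adj dA dB N Y) f)"
    unfolding e by auto
qed

lemma E_trace: assumes "a < n" "b < n" shows "mtrace (E n (b,a)) = (if a = b then 1 else 0)"
proof -
  have "mtrace (E n (b,a)) = (\<Sum>i<n. if i = b \<and> i = a then 1 else 0)"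
    unfolding mtrace_def E_def by (intro sum.cong refl) auto
  also have "\<dots> = (if a = b then 1 else 0)"
  proof (cases "a = b")
    case True thus ?thesis using assms by simp
  next
    case False thus ?thesis by (intro trans[OF sum.neutral]) auto
  qed
  finally show ?thesis .
qed

lemma adj_povm_sum:
  assumes C: "CPTP dA dB N" and fin: "finite X"
    and P: "\<forall>i<dB. \<forall>j<dB. (\<Sum>x\<in>X. P x $$ (i,j)) = (if i = j then 1 else 0)"
    and a: "a < dA" and b: "b < dA"
  shows "(\<Sum>x\<in>X. adj dA dB N (P x) $$ (a,b)) = (if a = b then 1 else 0)"
proof -
  have L: "lin_map dA dB N" and T: "trace_preserving dA N" using C by (auto simp: CPTP_def)
  have EC: "N (E dA (b,a)) \<in> carrier_mat dB dB" by (rule lin_carrier[OF L E_carrier])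
  have "(\<Sum>x\<in>X. adj dA dB N (P x) $$ (a,b)) = (\<Sum>x\<in>X. tp dB (P x) (N (E dA (b,a))))"
    unfolding adj_def using a b by simp
  also have "\<dots> = (\<Sum>i<dB. \<Sum>j<dB. (\<Sum>x\<in>X. P x $$ (i,j)) * N (E dA (b,a)) $$ (j,i))"
    unfolding tp_def by (simp add: sum_distrib_right) (subst sum.swap, intro sum.cong refl, subst sum.swap, simp)
  also have "\<dots> = (\<Sum>i<dB. \<Sum>j<dB. (if i = j then 1 else 0) * N (E dA (b,a)) $$ (j,i))"
    using P by (intro sum.cong refl) simp
  also have "\<dots> = (\<Sum>i<dB. \<Sum>j<dB. if i = j then N (E dA (b,a)) $$ (j,i) else 0)"
    by (intro sum.cong refl) simp
  also have "\<dots> = mtrace (N (E dA (b,a)))"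
    using EC by (simp add: mtrace_carrier)
  also have "\<dots> = mtrace (E dA (b,a))" using T unfolding trace_preserving_def by simp
  finally show ?thesis using E_trace[OF a b] by simp
qed


definition GS :: "nat \<Rightarrow> nat set \<Rightarrow> (nat \<Rightarrow> real) \<Rightarrow> (nat \<Rightarrow> complex mat) \<Rightarrow> real set" where
  "GS d X p \<sigma> = {(\<Sum>x\<in>X. p x * Re (mtrace (P x * \<sigma> x))) | P. POVM d X P}"

lemma P_guess_GS: "P_guess d X p \<sigma> = Sup (GS d X p \<sigma>)"
  unfolding P_guess_def GS_def ..

lemma povm_sum_tp:
  assumes P: "\<forall>i<d. \<forall>j<d. (\<Sum>x\<in>X. P x $$ (i,j)) = (if i = j then 1 else 0)"
    and S: "S \<in> carrier_mat d d"
  shows "(\<Sum>x\<in>X. tp d (P x) S) = mtrace S"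
proof -
  have "(\<Sum>x\<in>X. tp d (P x) S) = (\<Sum>i<d. \<Sum>j<d. (\<Sum>x\<in>X. P x $$ (i,j)) * S $$ (j,i))"
    unfolding tp_def by (simp add: sum_distrib_right) (subst sum.swap, intro sum.cong refl, subst sum.swap, simp)
  also have "\<dots> = (\<Sum>i<d. \<Sum>j<d. if i = j then S $$ (j,i) else 0)"
    using P by (intro sum.cong refl) simp
  also have "\<dots> = mtrace S" using S by (simp add: mtrace_carrier)
  finally show ?thesis .
qed

lemma GS_bound:
  assumes fin: "finite X" and p: "\<forall>x\<in>X. 0 \<le> p x" and s1: "(\<Sum>x\<in>X. p x) = 1"
    and \<sigma>: "\<forall>x\<in>X. density d (\<sigma> x)" and v: "v \<in> GS d X p \<sigma>"
  shows "v \<le> 1"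
proof -
  obtain P where P: "POVM d X P" and ve: "v = (\<Sum>x\<in>X. p x * Re (mtrace (P x * \<sigma> x)))"
    using v unfolding GS_def by blast
  have one: "Re (mtrace (P x * \<sigma> x)) \<le> 1" if x: "x \<in> X" for x
  proof -
    have sx: "psd d (\<sigma> x)" "mtrace (\<sigma> x) = 1" using \<sigma> x by (auto simp: density_def)
    have Pc: "\<And>y. y \<in> X \<Longrightarrow> P y \<in> carrier_mat d d" using P psdD(3) unfolding POVM_def by blast
    have tpy: "\<And>y. y \<in> X \<Longrightarrow> 0 \<le> Re (tp d (P y) (\<sigma> x))"
      using P tp_psd sx(1) unfolding POVM_def by blast
    have "(\<Sum>y\<in>X. tp d (P y) (\<sigma> x)) = 1"
      using povm_sum_tp[where X = X and P = P and S = "\<sigma> x" and d = d] P sx psdD(3) unfolding POVM_def by auto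
    hence "(\<Sum>y\<in>X. Re (tp d (P y) (\<sigma> x))) = 1" by (metis Re_sum one_complex.sel(1))
    moreover have "Re (tp d (P x) (\<sigma> x)) \<le> (\<Sum>y\<in>X. Re (tp d (P y) (\<sigma> x)))"
      by (rule member_le_sum) (use x tpy fin in auto)
    moreover have "mtrace (P x * \<sigma> x) = tp d (P x) (\<sigma> x)"
      by (rule mtrace_mult[OF Pc[OF x] psdD(3)[OF sx(1)]])
    ultimately show ?thesis by simp
  qed
  have "v \<le> (\<Sum>x\<in>X. p x * 1)" unfolding ve
    by (rule sum_mono) (use p one in \<open>auto intro: mult_left_le\<close>)
  thus ?thesis using s1 by simp
qed

lemma psd_one: "psd n (1\<^sub>m n)"
  unfolding psd_iff
proof (intro conjI allI)
  fix f
  have "hf n (1\<^sub>m n) f = (\<Sum>i<n. \<Sum>j<n. if i = j then cnj (f i) * f j else 0)"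
    unfolding hf_def by (intro sum.cong refl) simp
  also have "\<dots> = ip n f f" unfolding ip_def by simp
  finally show "Im (hf n (1\<^sub>m n) f) = 0" "0 \<le> Re (hf n (1\<^sub>m n) f)" using ip_self_real[of n f] by auto
qed simp

lemma psd_zero: "psd n (0\<^sub>m n n)"
  unfolding psd_iff
proof (intro conjI allI)
  fix f
  have "hf n (0\<^sub>m n n) f = 0" unfolding hf_def by (intro sum.neutral ballI) simp
  thus "Im (hf n (0\<^sub>m n n) f) = 0" "0 \<le> Re (hf n (0\<^sub>m n n) f)" by auto
qed simp

lemma POVM_exists:
  assumes fin: "finite X" and x0: "x0 \<in> X"
  shows "POVM d X (\<lambda>x. if x = x0 then 1\<^sub>m d else 0\<^sub>m d d)"
  unfolding POVM_def
proof (intro conjI ballI allI impI)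
  fix x assume "x \<in> X"
  show "psd d (if x = x0 then 1\<^sub>m d else 0\<^sub>m d d)" using psd_one psd_zero by simp
next
  fix i j assume ij: "i < d" "j < d"
  have "(\<Sum>x\<in>X. (if x = x0 then 1\<^sub>m d else 0\<^sub>m d d) $$ (i,j)) = (\<Sum>x\<in>X. if x = x0 then 1\<^sub>m d $$ (i,j) else 0)"
    using ij by (intro sum.cong refl) simp
  also have "\<dots> = (if i = j then 1 else 0)" using fin x0 ij by simp
  finally show "(\<Sum>x\<in>X. (if x = x0 then 1\<^sub>m d else 0\<^sub>m d d) $$ (i,j)) = (if i = j then 1 else 0)" .
qed

lemma GS_ne: "finite X \<Longrightarrow> X \<noteq> {} \<Longrightarrow> GS d X p \<sigma> \<noteq> {}"
  unfolding GS_def using POVM_exists by blast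

lemma ens_ne: "ensemble d X p \<rho> \<Longrightarrow> X \<noteq> {}"
  unfolding ensemble_def by auto

lemma dir_easy:
  assumes N: "CPTP dA dB N" and N': "CPTP dA dB' N'" and C: "CPTP dB dB' C"
    and eq: "\<forall>X \<in> carrier_mat dA dA. N' X = C (N X)"
  shows "more_informative dA dB N dB' N'"
  unfolding more_informative_def
proof (intro allI impI)
  fix X p \<rho> assume ens: "ensemble dA X p \<rho>"
  have fin: "finite X" and pp: "\<forall>x\<in>X. 0 \<le> p x" and s1: "(\<Sum>x\<in>X. p x) = 1"
    and dens: "\<forall>x\<in>X. density dA (\<rho> x)"
    using ens unfolding ensemble_def by auto
  have LC: "lin_map dB dB' C" using C by (simp add: CPTP_def)
  have dN: "\<forall>x\<in>X. density dB (N (\<rho> x))" using dens cp_density[OF N] by blast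
  have sub: "GS dB' X p (\<lambda>x. N' (\<rho> x)) \<subseteq> GS dB X p (\<lambda>x. N (\<rho> x))"
  proof
    fix v assume "v \<in> GS dB' X p (\<lambda>x. N' (\<rho> x))"
    then obtain P' where P': "POVM dB' X P'" and ve: "v = (\<Sum>x\<in>X. p x * Re (mtrace (P' x * N' (\<rho> x))))"
      unfolding GS_def by blast
    define P where "P x = adj dB dB' C (P' x)" for x
    have PP: "POVM dB X P" unfolding POVM_def P_def
    proof (intro conjI ballI allI impI)
      fix x assume "x \<in> X" thus "psd dB (adj dB dB' C (P' x))" using adj_psd[OF C] P' unfolding POVM_def by blast
    next
      fix i j assume "i < dB" "j < dB"
      thus "(\<Sum>x\<in>X. adj dB dB' C (P' x) $$ (i, j)) = (if i = j then 1 else 0)"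
        using adj_povm_sum[OF C fin] P' unfolding POVM_def by blast
    qed
    have "mtrace (P x * N (\<rho> x)) = mtrace (P' x * N' (\<rho> x))" if x: "x \<in> X" for x
    proof -
      have Nc: "N (\<rho> x) \<in> carrier_mat dB dB" using dN x psdD(3) unfolding density_def by blast
      have \<rho>c: "\<rho> x \<in> carrier_mat dA dA" using dens x psdD(3) unfolding density_def by blast
      have P'c: "P' x \<in> carrier_mat dB' dB'" using P' x psdD(3) unfolding POVM_def by blast
      have "mtrace (P x * N (\<rho> x)) = tp dB (P x) (N (\<rho> x))"
        by (rule mtrace_mult[OF _ Nc]) (simp add: P_def)
      also have "\<dots> = tp dB' (P' x) (C (N (\<rho> x)))" unfolding P_def by (rule adj_tp[OF LC Nc])
      also have "C (N (\<rho> x)) = N' (\<rho> x)" using eq \<rho>c by simp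
      also have "tp dB' (P' x) (N' (\<rho> x)) = mtrace (P' x * N' (\<rho> x))"
        using N' by (intro mtrace_mult[symmetric, OF P'c] lin_carrier[OF _ \<rho>c]) (simp add: CPTP_def)
      finally show ?thesis .
    qed
    hence "v = (\<Sum>x\<in>X. p x * Re (mtrace (P x * N (\<rho> x))))" unfolding ve by simp
    thus "v \<in> GS dB X p (\<lambda>x. N (\<rho> x))" using PP unfolding GS_def by blast
  qed
  have ne: "GS dB' X p (\<lambda>x. N' (\<rho> x)) \<noteq> {}" using GS_ne[OF fin ens_ne[OF ens]] .
  have bdd: "bdd_above (GS dB X p (\<lambda>x. N (\<rho> x)))"
    using GS_bound[OF fin pp s1 dN] by (intro bdd_aboveI) blast
  show "P_guess dB' X p (\<lambda>x. N' (\<rho> x)) \<le> P_guess dB X p (\<lambda>x. N (\<rho> x))"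
    unfolding P_guess_GS by (rule cSup_subset_mono[OF ne bdd sub])
qed


lemma sum_split_blocks: fixes k n :: nat shows "(\<Sum>i<k*n. F i) = (\<Sum>p<k. \<Sum>a<n. F (p*n + a))"
proof -
  have "(\<Sum>i<k*n. F i) = (\<Sum>p<k. \<Sum>i\<in>{p*n..<p*n+n}. F i)" using sum.nat_group[of F n k] by simp
  also have "\<dots> = (\<Sum>p<k. \<Sum>a<n. F (p*n+a))"
  proof (rule sum.cong[OF refl])
    fix p
    have "{p*n..<p*n+n} = {0+p*n..<n+p*n}" by (simp add: add.commute)
    hence "(\<Sum>i\<in>{p*n..<p*n+n}. F i) = (\<Sum>a\<in>{0..<n}. F (a + p*n))" by (simp only: sum.shift_bounds_nat_ivl)
    thus "(\<Sum>i\<in>{p*n..<p*n+n}. F i) = (\<Sum>a<n. F (p*n+a))" by (simp add: atLeast0LessThan add.commute)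
  qed
  finally show ?thesis .
qed

lemma divmod_blk1: "a < (n::nat) \<Longrightarrow> (p*n + a) div n = p" by auto
lemma divmod_blk2: "a < (n::nat) \<Longrightarrow> (p*n + a) mod n = a" by auto
lemmas divmod_blk = divmod_blk1 divmod_blk2

lemma blk_lt: assumes "p < (k::nat)" "r < n" shows "p*n + r < k*n"
proof -
  have "p*n + r < p*n + n" using assms by simp
  also have "\<dots> = Suc p * n" by simp
  also have "\<dots> \<le> k * n" using assms by (intro mult_le_mono1) simp
  finally show ?thesis .
qed

lemma blockform:
  "(\<Sum>p<k. \<Sum>q<k. cnj (\<alpha> p) * hf n (block n M p q) w * \<alpha> q) =
   hf (k*n) M (\<lambda>i. \<alpha> (i div n) * w (i mod n))"
proof -
  have "hf (k*n) M (\<lambda>i. \<alpha> (i div n) * w (i mod n)) =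
     (\<Sum>p<k. \<Sum>a<n. \<Sum>q<k. \<Sum>b<n. cnj (\<alpha> p * w a) * M $$ (p*n+a, q*n+b) * (\<alpha> q * w b))"
    unfolding hf_def sum_split_blocks by (intro sum.cong refl) (simp add: divmod_blk)
  also have "\<dots> = (\<Sum>p<k. \<Sum>q<k. \<Sum>a<n. \<Sum>b<n. cnj (\<alpha> p * w a) * M $$ (p*n+a, q*n+b) * (\<alpha> q * w b))"
    by (rule sum.cong[OF refl], rule sum.swap)
  also have "\<dots> = (\<Sum>p<k. \<Sum>q<k. cnj (\<alpha> p) * hf n (block n M p q) w * \<alpha> q)"
    unfolding hf_def block_def
    by (intro sum.cong refl) (simp add: sum_distrib_left sum_distrib_right mult_ac)
  finally show ?thesis by simp
qed

lemma swap3: "(\<Sum>r\<in>R. \<Sum>s\<in>S. \<Sum>l\<in>L. F r s l) = (\<Sum>l\<in>L. \<Sum>r\<in>R. \<Sum>s\<in>S. F r s l)"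
proof -
  have "(\<Sum>r\<in>R. \<Sum>s\<in>S. \<Sum>l\<in>L. F r s l) = (\<Sum>r\<in>R. \<Sum>l\<in>L. \<Sum>s\<in>S. F r s l)"
    by (rule sum.cong[OF refl], rule sum.swap)
  also have "\<dots> = (\<Sum>l\<in>L. \<Sum>r\<in>R. \<Sum>s\<in>S. F r s l)" by (rule sum.swap)
  finally show ?thesis .
qed

lemma alpha_prod: "cnj (\<Sum>s\<in>S. cnj (v s) * f s) * T * (\<Sum>s\<in>S. cnj (v s) * g s) =
   (\<Sum>r\<in>S. \<Sum>s\<in>S. T * (cnj (f r) * v r) * (cnj (v s) * g s))"
  unfolding cnj_sum by (simp add: sum_product sum_distrib_left mult_ac)

definition mp :: "nat \<Rightarrow> nat \<Rightarrow> nat \<Rightarrow> (nat \<Rightarrow> complex mat) \<Rightarrow> (nat \<Rightarrow> complex mat) \<Rightarrow> complex mat \<Rightarrow> complex mat" where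
  "mp n n' m G S Z = mat n' n' (\<lambda>q. \<Sum>l<m. tp n (G l) Z * S l $$ q)"

lemma tp_lin: "X \<in> carrier_mat n n \<Longrightarrow> Y \<in> carrier_mat n n \<Longrightarrow>
  tp n G (a \<cdot>\<^sub>m X + b \<cdot>\<^sub>m Y) = a * tp n G X + b * tp n G Y"
  unfolding tp_def by (simp add: sum.distrib sum_distrib_left algebra_simps)

lemma mp_lin: "lin_map n n' (mp n n' m G S)"
  unfolding lin_map_def
proof (intro conjI ballI allI)
  fix X :: "complex mat" assume "X \<in> carrier_mat n n" show "mp n n' m G S X \<in> carrier_mat n' n'" unfolding mp_def by simp
next
  fix X Y :: "complex mat" and a b assume X: "X \<in> carrier_mat n n" and Y: "Y \<in> carrier_mat n n"
  show "mp n n' m G S (a \<cdot>\<^sub>m X + b \<cdot>\<^sub>m Y) = a \<cdot>\<^sub>m mp n n' m G S X + b \<cdot>\<^sub>m mp n n' m G S Y"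
    unfolding mp_def tp_lin[OF X Y]
    by (intro eq_matI) (auto simp: sum.distrib sum_distrib_left algebra_simps)
qed

lemma mp_tp:
  assumes P: "\<forall>i<n. \<forall>j<n. (\<Sum>l<m. G l $$ (i,j)) = (if i = j then 1 else 0)"
    and S: "\<forall>l<m. S l \<in> carrier_mat n' n' \<and> mtrace (S l) = 1"
  shows "trace_preserving n (mp n n' m G S)"
  unfolding trace_preserving_def
proof (intro ballI)
  fix Z :: "complex mat" assume Z: "Z \<in> carrier_mat n n"
  have "mtrace (mp n n' m G S Z) = (\<Sum>i<n'. \<Sum>l<m. tp n (G l) Z * S l $$ (i,i))"
    unfolding mp_def mtrace_def by simp
  also have "\<dots> = (\<Sum>l<m. tp n (G l) Z * (\<Sum>i<n'. S l $$ (i,i)))"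
    by (subst sum.swap) (simp add: sum_distrib_left)
  also have "\<dots> = (\<Sum>l<m. tp n (G l) Z)" using S by (intro sum.cong refl) (auto simp: mtrace_carrier)
  also have "\<dots> = mtrace Z" by (rule povm_sum_tp[OF P Z])
  finally show "mtrace (mp n n' m G S Z) = mtrace Z" .
qed

lemma tp_decomp:
  assumes G: "psd n G"
  shows "\<exists>g w. (\<forall>t<n. 0 \<le> g t) \<and> (\<forall>B. tp n G B = (\<Sum>t<n. complex_of_real (g t) * hf n B (w t)))"
proof -
  obtain w g where on: "onb n n w" and g: "\<forall>l<n. 0 \<le> g l"
    and Ge: "\<forall>i<n. \<forall>j<n. G $$ (i,j) = (\<Sum>l<n. complex_of_real (g l) * w l i * cnj (w l j))"
    using psd_decomp[OF G] by blast
  have "tp n G B = (\<Sum>t<n. complex_of_real (g t) * hf n B (w t))" for B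
  proof -
    have "tp n G B = (\<Sum>i<n. \<Sum>j<n. (\<Sum>l<n. complex_of_real (g l) * w l i * cnj (w l j)) * B $$ (j,i))"
      unfolding tp_def using Ge by (intro sum.cong refl) simp
    also have "\<dots> = (\<Sum>i<n. \<Sum>j<n. \<Sum>l<n. complex_of_real (g l) * (cnj (w l j) * B $$ (j,i) * w l i))"
      by (intro sum.cong refl) (simp add: sum_distrib_left sum_distrib_right mult_ac)
    also have "\<dots> = (\<Sum>i<n. \<Sum>l<n. \<Sum>j<n. complex_of_real (g l) * (cnj (w l j) * B $$ (j,i) * w l i))"
      by (rule sum.cong[OF refl], rule sum.swap)
    also have "\<dots> = (\<Sum>l<n. \<Sum>i<n. \<Sum>j<n. complex_of_real (g l) * (cnj (w l j) * B $$ (j,i) * w l i))"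
      by (rule sum.swap)
    also have "\<dots> = (\<Sum>l<n. \<Sum>j<n. \<Sum>i<n. complex_of_real (g l) * (cnj (w l j) * B $$ (j,i) * w l i))"
      by (rule sum.cong[OF refl], rule sum.swap)
    also have "\<dots> = (\<Sum>t<n. complex_of_real (g t) * hf n B (w t))"
      unfolding hf_def by (simp add: sum_distrib_left)
    finally show ?thesis .
  qed
  thus ?thesis using g by blast
qed

lemma ampl_mp_entry:
  assumes i: "i < k*n'" and j: "j < k*n'"
  shows "ampliate k n n' (mp n n' m G (\<lambda>l. rk n' (v l))) M $$ (i,j) =
    (\<Sum>l<m. tp n (G l) (block n M (i div n') (j div n')) * (v l (i mod n') * cnj (v l (j mod n'))))"
proof -
  have n': "n' > 0" using i by (cases n') auto
  show ?thesis using i j n' unfolding ampliate_def mp_def rk_def by simp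
qed

lemma mp_cp:
  assumes G: "\<forall>l<m. psd n (G l)"
  shows "completely_positive n n' (mp n n' m G (\<lambda>l. rk n' (v l)))"
  unfolding completely_positive_def
proof (intro allI impI)
  fix k M assume M: "psd (k*n) M"
  let ?A = "ampliate k n n' (mp n n' m G (\<lambda>l. rk n' (v l))) M"
  obtain g w where g: "\<And>l t. l < m \<Longrightarrow> t < n \<Longrightarrow> 0 \<le> g l t"
    and tpd: "\<And>l B. l < m \<Longrightarrow> tp n (G l) B = (\<Sum>t<n. complex_of_real (g l t) * hf n B (w l t))"
  proof -
    have "\<forall>l<m. \<exists>g w. (\<forall>t<n. 0 \<le> g t) \<and> (\<forall>B. tp n (G l) B = (\<Sum>t<n. complex_of_real (g t) * hf n B (w t)))"
      using G tp_decomp by blast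
    then obtain g w where "\<forall>l<m. (\<forall>t<n. 0 \<le> g l t) \<and> (\<forall>B. tp n (G l) B = (\<Sum>t<n. complex_of_real (g l t) * hf n B (w l t)))"
      by metis
    thus ?thesis using that by blast
  qed
  show "psd (k*n') ?A"
    unfolding psd_iff
  proof (intro conjI allI)
    show "?A \<in> carrier_mat (k*n') (k*n')" unfolding ampliate_def by simp
    fix f :: "nat \<Rightarrow> complex"
    define \<alpha> where "\<alpha> l p = (\<Sum>s<n'. cnj (v l s) * f (p*n' + s))" for l p
    define T where "T l p q = tp n (G l) (block n M p q)" for l p q
    have "hf (k*n') ?A f = (\<Sum>p<k. \<Sum>r<n'. \<Sum>q<k. \<Sum>s<n'.
        cnj (f (p*n'+r)) * (\<Sum>l<m. T l p q * (v l r * cnj (v l s))) * f (q*n'+s))"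
    proof -
      have "hf (k*n') ?A f = (\<Sum>p<k. \<Sum>r<n'. \<Sum>q<k. \<Sum>s<n'.
        cnj (f (p*n'+r)) * ?A $$ (p*n'+r, q*n'+s) * f (q*n'+s))"
        unfolding hf_def sum_split_blocks ..
      also have "\<dots> = (\<Sum>p<k. \<Sum>r<n'. \<Sum>q<k. \<Sum>s<n'.
        cnj (f (p*n'+r)) * (\<Sum>l<m. T l p q * (v l r * cnj (v l s))) * f (q*n'+s))"
      proof (intro sum.cong refl)
        fix p r q s assume "p \<in> {..<k}" "r \<in> {..<n'}" "q \<in> {..<k}" "s \<in> {..<n'}"
        hence lt: "p < k" "r < n'" "q < k" "s < n'" by auto
        have "p*n'+r < k*n'" "q*n'+s < k*n'" using lt by (simp_all add: blk_lt)
        thus "cnj (f (p*n'+r)) * ?A $$ (p*n'+r, q*n'+s) * f (q*n'+s) =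
          cnj (f (p*n'+r)) * (\<Sum>l<m. T l p q * (v l r * cnj (v l s))) * f (q*n'+s)"
          using lt by (simp add: ampl_mp_entry divmod_blk T_def)
      qed
      finally show ?thesis .
    qed
    also have "\<dots> = (\<Sum>p<k. \<Sum>q<k. \<Sum>r<n'. \<Sum>s<n'. \<Sum>l<m.
        T l p q * (cnj (f (p*n'+r)) * v l r) * (cnj (v l s) * f (q*n'+s)))"
    proof -
      have "(\<Sum>p<k. \<Sum>r<n'. \<Sum>q<k. \<Sum>s<n'.
        cnj (f (p*n'+r)) * (\<Sum>l<m. T l p q * (v l r * cnj (v l s))) * f (q*n'+s)) =
        (\<Sum>p<k. \<Sum>q<k. \<Sum>r<n'. \<Sum>s<n'.
        cnj (f (p*n'+r)) * (\<Sum>l<m. T l p q * (v l r * cnj (v l s))) * f (q*n'+s))"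
        by (rule sum.cong[OF refl], rule sum.swap)
      also have "\<dots> = (\<Sum>p<k. \<Sum>q<k. \<Sum>r<n'. \<Sum>s<n'. \<Sum>l<m.
        T l p q * (cnj (f (p*n'+r)) * v l r) * (cnj (v l s) * f (q*n'+s)))"
        by (intro sum.cong refl) (simp add: sum_distrib_left sum_distrib_right mult_ac)
      finally show ?thesis .
    qed
    also have "\<dots> = (\<Sum>p<k. \<Sum>q<k. \<Sum>l<m. \<Sum>r<n'. \<Sum>s<n'.
        T l p q * (cnj (f (p*n'+r)) * v l r) * (cnj (v l s) * f (q*n'+s)))"
      by (rule sum.cong[OF refl], rule sum.cong[OF refl], rule swap3)
    also have "\<dots> = (\<Sum>p<k. \<Sum>q<k. \<Sum>l<m. cnj (\<alpha> l p) * T l p q * \<alpha> l q)"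
      unfolding \<alpha>_def by (intro sum.cong refl) (rule alpha_prod[symmetric])
    also have "\<dots> = (\<Sum>l<m. \<Sum>p<k. \<Sum>q<k. cnj (\<alpha> l p) * T l p q * \<alpha> l q)"
      by (rule swap3)
    also have "\<dots> = (\<Sum>l<m. \<Sum>t<n. complex_of_real (g l t) *
         hf (k*n) M (\<lambda>i. \<alpha> l (i div n) * w l t (i mod n)))"
    proof (rule sum.cong[OF refl])
      fix l assume "l \<in> {..<m}"
      hence l: "l < m" by simp
      have "(\<Sum>p<k. \<Sum>q<k. cnj (\<alpha> l p) * T l p q * \<alpha> l q) =
          (\<Sum>p<k. \<Sum>q<k. \<Sum>t<n. complex_of_real (g l t) * (cnj (\<alpha> l p) * hf n (block n M p q) (w l t) * \<alpha> l q))"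
        unfolding T_def tpd[OF l] by (intro sum.cong refl) (simp add: sum_distrib_left sum_distrib_right mult_ac)
      also have "\<dots> = (\<Sum>t<n. \<Sum>p<k. \<Sum>q<k. complex_of_real (g l t) * (cnj (\<alpha> l p) * hf n (block n M p q) (w l t) * \<alpha> l q))"
        by (rule swap3)
      also have "\<dots> = (\<Sum>t<n. complex_of_real (g l t) * (\<Sum>p<k. \<Sum>q<k. cnj (\<alpha> l p) * hf n (block n M p q) (w l t) * \<alpha> l q))"
        by (simp add: sum_distrib_left)
      also have "\<dots> = (\<Sum>t<n. complex_of_real (g l t) * hf (k*n) M (\<lambda>i. \<alpha> l (i div n) * w l t (i mod n)))"
        by (simp add: blockform)
      finally show "(\<Sum>p<k. \<Sum>q<k. cnj (\<alpha> l p) * T l p q * \<alpha> l q) =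
          (\<Sum>t<n. complex_of_real (g l t) * hf (k*n) M (\<lambda>i. \<alpha> l (i div n) * w l t (i mod n)))" .
    qed
    finally have e: "hf (k*n') ?A f = (\<Sum>l<m. \<Sum>t<n. complex_of_real (g l t) *
         hf (k*n) M (\<lambda>i. \<alpha> l (i div n) * w l t (i mod n)))" .
    have "Im (hf (k*n') ?A f) = 0 \<and> 0 \<le> Re (hf (k*n') ?A f)"
      unfolding e
      by (intro sum_real_nonneg) (use g psdD(1,2)[OF M] in auto)
    thus "Im (hf (k*n') ?A f) = 0" "0 \<le> Re (hf (k*n') ?A f)" by auto
  qed
qed


definition v1 :: "nat \<Rightarrow> nat \<Rightarrow> complex" where "v1 a = (\<lambda>k. if k = a then 1 else 0)"
definition v2 :: "nat \<Rightarrow> nat \<Rightarrow> nat \<Rightarrow> complex" where "v2 a b = (\<lambda>k. if k = a then 1 else if k = b then 1 else 0)"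
definition v3 :: "nat \<Rightarrow> nat \<Rightarrow> nat \<Rightarrow> complex" where "v3 a b = (\<lambda>k. if k = a then 1 else if k = b then \<i> else 0)"

definition Rset :: "nat \<Rightarrow> complex mat set" where
  "Rset n = (\<lambda>a. rk n (v1 a)) ` {..<n} \<union>
     (\<lambda>(a,b). complex_of_real (1/2) \<cdot>\<^sub>m rk n (v2 a b)) ` {(a,b). a < n \<and> b < n \<and> a \<noteq> b} \<union>
     (\<lambda>(a,b). complex_of_real (1/2) \<cdot>\<^sub>m rk n (v3 a b)) ` {(a,b). a < n \<and> b < n \<and> a \<noteq> b}"

lemma finite_Rset: "finite (Rset n)"
proof -
  have "{(a,b). a < n \<and> b < n \<and> a \<noteq> b} \<subseteq> {..<n} \<times> {..<n}" by auto
  hence "finite {(a,b). a < n \<and> b < n \<and> a \<noteq> b}" by (rule finite_subset) simp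
  thus ?thesis unfolding Rset_def by simp
qed

lemma mtrace_rk: "mtrace (rk n f) = ip n f f"
proof -
  have "mtrace (rk n f) = (\<Sum>i<n. rk n f $$ (i,i))" by (rule mtrace_carrier[OF rk_carrier])
  also have "\<dots> = ip n f f" unfolding ip_def by (intro sum.cong refl) (simp add: rk_def mult.commute)
  finally show ?thesis .
qed

lemma mtrace_smult: "M \<in> carrier_mat n n \<Longrightarrow> mtrace (c \<cdot>\<^sub>m M) = c * mtrace M"
proof -
  assume M: "M \<in> carrier_mat n n"
  have "mtrace (c \<cdot>\<^sub>m M) = (\<Sum>i<n. (c \<cdot>\<^sub>m M) $$ (i,i))" by (rule mtrace_carrier) (use M in simp)
  also have "\<dots> = c * (\<Sum>i<n. M $$ (i,i))" using M by (simp add: sum_distrib_left)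
  also have "\<dots> = c * mtrace M" using mtrace_carrier[OF M] by simp
  finally show ?thesis .
qed

lemma psd_scale: assumes "psd n M" "0 \<le> c" shows "psd n (complex_of_real c \<cdot>\<^sub>m M)"
proof -
  have M: "M \<in> carrier_mat n n" using assms psdD(3) by blast
  have "hf n (complex_of_real c \<cdot>\<^sub>m M) f = complex_of_real c * hf n M f" for f
    unfolding hf_def using M by (simp add: sum_distrib_left mult_ac)
  thus ?thesis using assms M unfolding psd_iff by auto
qed

lemma ip_v1: assumes "a < n" shows "ip n (v1 a) (v1 a) = 1"
  unfolding ip_def by (subst sum_one[OF assms]) (auto simp: v1_def)

lemma ip_v2: assumes "a < n" "b < n" "a \<noteq> b" shows "ip n (v2 a b) (v2 a b) = 2"
  unfolding ip_def by (subst sum_two[OF assms]) (use assms in \<open>auto simp: v2_def\<close>)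

lemma ip_v3: assumes "a < n" "b < n" "a \<noteq> b" shows "ip n (v3 a b) (v3 a b) = 2"
  unfolding ip_def by (subst sum_two[OF assms]) (use assms in \<open>auto simp: v3_def\<close>)

lemma Rset_density: "\<rho> \<in> Rset n \<Longrightarrow> density n \<rho>"
proof -
  assume "\<rho> \<in> Rset n"
  then consider (a) a where "a < n" "\<rho> = rk n (v1 a)"
    | (b) a b where "a < n" "b < n" "a \<noteq> b" "\<rho> = complex_of_real (1/2) \<cdot>\<^sub>m rk n (v2 a b)"
    | (c) a b where "a < n" "b < n" "a \<noteq> b" "\<rho> = complex_of_real (1/2) \<cdot>\<^sub>m rk n (v3 a b)"
    unfolding Rset_def by auto
  thus "density n \<rho>"
  proof cases
    case a thus ?thesis unfolding density_def using psd_rk mtrace_rk ip_v1 by simp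
  next
    case b
    have "mtrace (complex_of_real (1/2) \<cdot>\<^sub>m rk n (v2 a b)) = complex_of_real (1/2) * mtrace (rk n (v2 a b))"
      by (rule mtrace_smult[OF rk_carrier])
    thus ?thesis unfolding density_def using b psd_scale[OF psd_rk, of "1/2"] mtrace_rk ip_v2[OF b(1-3)] by simp
  next
    case c
    have "mtrace (complex_of_real (1/2) \<cdot>\<^sub>m rk n (v3 a b)) = complex_of_real (1/2) * mtrace (rk n (v3 a b))"
      by (rule mtrace_smult[OF rk_carrier])
    thus ?thesis unfolding density_def using c psd_scale[OF psd_rk, of "1/2"] mtrace_rk ip_v3[OF c(1-3)] by simp
  qed
qed

lemma E_comb:
  assumes a: "a < n" and b: "b < n" and ab: "a \<noteq> b"
  shows "E n (a,b) = mat n n (\<lambda>q. \<Sum>t<4. ([1/2, \<i>/2, -(1+\<i>)/2, -(1+\<i>)/2] ! t) *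
      ([rk n (v2 a b), rk n (v3 a b), rk n (v1 a), rk n (v1 b)] ! t) $$ q)"
proof (rule eq_matI)
  fix i j assume "i < dim_row (mat n n (\<lambda>q. \<Sum>t<4. ([1/2, \<i>/2, -(1+\<i>)/2, -(1+\<i>)/2] ! t) *
      ([rk n (v2 a b), rk n (v3 a b), rk n (v1 a), rk n (v1 b)] ! t) $$ q))"
    "j < dim_col (mat n n (\<lambda>q. \<Sum>t<4. ([1/2, \<i>/2, -(1+\<i>)/2, -(1+\<i>)/2] ! t) *
      ([rk n (v2 a b), rk n (v3 a b), rk n (v1 a), rk n (v1 b)] ! t) $$ q))"
  hence ij: "i < n" "j < n" by auto
  have s4: "(\<Sum>t<4. F t) = F 0 + F 1 + F 2 + F (3::nat)" for F :: "nat \<Rightarrow> complex"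
    by (simp add: eval_nat_numeral)
  show "E n (a,b) $$ (i,j) = mat n n (\<lambda>q. \<Sum>t<4. ([1/2, \<i>/2, -(1+\<i>)/2, -(1+\<i>)/2] ! t) *
      ([rk n (v2 a b), rk n (v3 a b), rk n (v1 a), rk n (v1 b)] ! t) $$ q) $$ (i,j)"
    using ij ab unfolding s4
    by (auto simp: E_def rk_def v1_def v2_def v3_def numeral_eq_Suc field_simps complex_eq_iff)
qed (simp_all add: E_def)

lemma smult_cancel:
  assumes c: "(c::complex) \<noteq> 0" and A: "A \<in> carrier_mat n n" and B: "B \<in> carrier_mat n n"
    and e: "c \<cdot>\<^sub>m A = c \<cdot>\<^sub>m B"
  shows "A = B"
proof (rule eq_matI)
  fix i j assume "i < dim_row B" "j < dim_col B"
  hence ij: "i < n" "j < n" using B by auto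
  have "(c \<cdot>\<^sub>m A) $$ (i,j) = (c \<cdot>\<^sub>m B) $$ (i,j)" using e by simp
  thus "A $$ (i,j) = B $$ (i,j)" using ij A B c by simp
qed (use A B in auto)

lemma lin_comp: "lin_map dA dB N \<Longrightarrow> lin_map dB dC M \<Longrightarrow> lin_map dA dC (\<lambda>X. M (N X))"
  unfolding lin_map_def by auto

lemma agree:
  assumes L1: "lin_map n d \<Phi>" and L2: "lin_map n d \<Psi>" and R: "\<forall>\<rho>\<in>Rset n. \<Phi> \<rho> = \<Psi> \<rho>"
    and X: "X \<in> carrier_mat n n"
  shows "\<Phi> X = \<Psi> X"
proof -
  have r1: "\<Phi> (rk n (v1 a)) = \<Psi> (rk n (v1 a))" if "a < n" for a
    using R that unfolding Rset_def by auto
  have r2: "\<Phi> (rk n (v2 a b)) = \<Psi> (rk n (v2 a b))" if "a < n" "b < n" "a \<noteq> b" for a b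
  proof -
    have "complex_of_real (1/2) \<cdot>\<^sub>m rk n (v2 a b) \<in> Rset n" unfolding Rset_def
      by (rule UnI1, rule UnI2, rule image_eqI[where x="(a,b)"]) (use that in auto)
    hence "\<Phi> (complex_of_real (1/2) \<cdot>\<^sub>m rk n (v2 a b)) = \<Psi> (complex_of_real (1/2) \<cdot>\<^sub>m rk n (v2 a b))"
      using R by blast
    hence "complex_of_real (1/2) \<cdot>\<^sub>m \<Phi> (rk n (v2 a b)) = complex_of_real (1/2) \<cdot>\<^sub>m \<Psi> (rk n (v2 a b))"
      using lin_smult[OF L1 rk_carrier] lin_smult[OF L2 rk_carrier] by metis
    note eq12 = this
    show ?thesis by (rule smult_cancel[OF _ lin_carrier[OF L1 rk_carrier] lin_carrier[OF L2 rk_carrier] eq12]) simp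
  qed
  have r3: "\<Phi> (rk n (v3 a b)) = \<Psi> (rk n (v3 a b))" if "a < n" "b < n" "a \<noteq> b" for a b
  proof -
    have "complex_of_real (1/2) \<cdot>\<^sub>m rk n (v3 a b) \<in> Rset n" unfolding Rset_def
      by (rule UnI2, rule image_eqI[where x="(a,b)"]) (use that in auto)
    hence "\<Phi> (complex_of_real (1/2) \<cdot>\<^sub>m rk n (v3 a b)) = \<Psi> (complex_of_real (1/2) \<cdot>\<^sub>m rk n (v3 a b))"
      using R by blast
    hence "complex_of_real (1/2) \<cdot>\<^sub>m \<Phi> (rk n (v3 a b)) = complex_of_real (1/2) \<cdot>\<^sub>m \<Psi> (rk n (v3 a b))"
      using lin_smult[OF L1 rk_carrier] lin_smult[OF L2 rk_carrier] by metis
    note eq12 = this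
    show ?thesis by (rule smult_cancel[OF _ lin_carrier[OF L1 rk_carrier] lin_carrier[OF L2 rk_carrier] eq12]) simp
  qed
  have rE: "\<Phi> (E n p) = \<Psi> (E n p)" if p: "p \<in> pairs n" for p
  proof -
    obtain a b where pab: "p = (a,b)" "a < n" "b < n" using p unfolding pairs_def by auto
    show ?thesis
    proof (cases "a = b")
      case True
      have "E n p = rk n (v1 a)" unfolding pab True E_def rk_def v1_def by (intro eq_matI) auto
      thus ?thesis using r1 pab by simp
    next
      case False
      define cs where "cs = (\<lambda>t. [1/2, \<i>/2, -(1+\<i>)/2, -(1+\<i>)/2] ! t)"
      define Xs where "Xs = (\<lambda>t. [rk n (v2 a b), rk n (v3 a b), rk n (v1 a), rk n (v1 b)] ! t)"
      have Xc: "\<forall>t\<in>{..<4}. Xs t \<in> carrier_mat n n" unfolding Xs_def by (auto simp: less_Suc_eq numeral_eq_Suc)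
      have eqE: "E n p = mat n n (\<lambda>q. \<Sum>t<4. cs t * Xs t $$ q)"
        unfolding pab cs_def Xs_def by (rule E_comb[OF pab(2,3) False])
      have XX: "\<forall>t\<in>{..<4}. \<Phi> (Xs t) = \<Psi> (Xs t)"
        unfolding Xs_def using r1 r2 r3 pab False by (auto simp: less_Suc_eq numeral_eq_Suc)
      have "\<Phi> (E n p) = mat d d (\<lambda>q. \<Sum>t<4. cs t * \<Phi> (Xs t) $$ q)"
        unfolding eqE by (rule lin_sum[OF L1 _ Xc]) simp
      also have "\<dots> = mat d d (\<lambda>q. \<Sum>t<4. cs t * \<Psi> (Xs t) $$ q)" using XX by simp
      also have "\<dots> = \<Psi> (E n p)"
        unfolding eqE by (rule lin_sum[OF L2 _ Xc, symmetric]) simp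
      finally show ?thesis .
    qed
  qed
  show ?thesis
    using lin_expand[OF L1 X] lin_expand[OF L2 X] rE by simp
qed


definition Gm :: "nat \<Rightarrow> (nat \<times> nat \<times> nat \<Rightarrow> complex) \<Rightarrow> nat \<Rightarrow> complex mat" where
  "Gm n g l = mat n n (\<lambda>(i,j). g (l,i,j))"

definition Gset :: "nat \<Rightarrow> nat \<Rightarrow> (nat \<times> nat \<times> nat \<Rightarrow> complex) set" where
  "Gset m n = {g. (\<forall>l i j. \<not>(l < m \<and> i < n \<and> j < n) \<longrightarrow> g (l,i,j) = 0) \<and> (\<forall>l. l < m \<longrightarrow> psd n (Gm n g l)) \<and>
     (\<forall>i j. i < n \<longrightarrow> j < n \<longrightarrow> (\<Sum>l<m. g (l,i,j)) = (if i = j then 1 else 0))}"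

definition hfG :: "nat \<Rightarrow> (nat \<times> nat \<times> nat \<Rightarrow> complex) \<Rightarrow> nat \<Rightarrow> (nat \<Rightarrow> complex) \<Rightarrow> complex" where
  "hfG n g l f = (\<Sum>i<n. \<Sum>j<n. cnj (f i) * g (l,i,j) * f j)"

lemma Gm_carrier[simp]: "Gm n g l \<in> carrier_mat n n" unfolding Gm_def by simp

lemma hf_Gm: "hf n (Gm n g l) f = hfG n g l f"
  unfolding hf_def hfG_def Gm_def by (intro sum.cong refl) simp

lemma psd_Gm: "psd n (Gm n g l) \<longleftrightarrow> (\<forall>f. Im (hfG n g l f) = 0 \<and> 0 \<le> Re (hfG n g l f))"
  unfolding psd_iff hf_Gm by simp

lemma continuous_on_hfG[continuous_intros]: "continuous_on S (\<lambda>g. hfG n g l f)"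
  unfolding hfG_def by (intro continuous_intros)

lemma closed_Gset: "closed (Gset m n)"
proof -
  have e: "Gset m n = {g. \<forall>l i j. \<not>(l < m \<and> i < n \<and> j < n) \<longrightarrow> g (l,i,j) = 0} \<inter>
     {g. \<forall>l. l < m \<longrightarrow> (\<forall>f. Im (hfG n g l f) = 0 \<and> 0 \<le> Re (hfG n g l f))} \<inter>
     {g. \<forall>i j. i < n \<longrightarrow> j < n \<longrightarrow> (\<Sum>l<m. g (l,i,j)) = (if i = j then 1 else 0)}"
    unfolding Gset_def psd_Gm by blast
  show ?thesis unfolding e
    by (intro closed_Int closed_Collect_all closed_imp closed_Collect_conj closed_Collect_eq closed_Collect_le
        continuous_intros)
qed

lemma psd_diag: "psd n G \<Longrightarrow> i < n \<Longrightarrow> Im (G $$ (i,i)) = 0 \<and> 0 \<le> Re (G $$ (i,i))"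
  using psdD(1,2)[of n G "\<lambda>k. if k = i then 1 else 0"] hf_one[of i n G 1] by simp

lemma psd_offdiag:
  assumes G: "psd n G" and i: "i < n" and j: "j < n" and ij: "i \<noteq> j"
  shows "2 * cmod (G $$ (i,j)) \<le> Re (G $$ (i,i)) + Re (G $$ (j,j))"
proof (cases "G $$ (i,j) = 0")
  case True thus ?thesis using psd_diag[OF G i] psd_diag[OF G j] by simp
next
  case False
  define z where "z = G $$ (i,j)"
  have z0: "cmod z > 0" using False unfolding z_def by simp
  define c where "c = - cnj z / complex_of_real (cmod z)"
  have h: "herm n G" by (rule psd_herm[OF G])
  have Gji: "G $$ (j,i) = cnj z" unfolding z_def using hermD[OF h i j] by simp
  have zz: "z * cnj z = complex_of_real ((cmod z)^2)" by (rule complex_norm_square[symmetric])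
  have t1: "z * c = - complex_of_real (cmod z)"
    unfolding c_def using z0 zz by (simp add: field_simps power2_eq_square)
  have t2: "cnj c * cnj z = - complex_of_real (cmod z)"
    unfolding c_def using z0 zz by (simp add: field_simps power2_eq_square mult.commute)
  have t3: "cnj c * c = 1"
    unfolding c_def using z0 zz by (simp add: field_simps power2_eq_square mult.commute)
  have "hf n G (\<lambda>k. if k = i then 1 else if k = j then c else 0) =
      G $$ (i,i) + G $$ (j,j) - 2 * complex_of_real (cmod z)"
    unfolding hf_two[OF i j ij] Gji using t1 t2 t3 unfolding z_def[symmetric]
    by (simp add: algebra_simps)
  moreover have "0 \<le> Re (hf n G (\<lambda>k. if k = i then 1 else if k = j then c else 0))" by (rule psdD(2)[OF G])
  ultimately show ?thesis unfolding z_def by simp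
qed

lemma Gset_bound:
  assumes g: "g \<in> Gset m n"
  shows "cmod (g x) \<le> 1"
proof -
  obtain l i j where x: "x = (l,i,j)" by (cases x) auto
  show ?thesis
  proof (cases "l < m \<and> i < n \<and> j < n")
    case False thus ?thesis using g x unfolding Gset_def by auto
  next
    case True
    hence l: "l < m" and i: "i < n" and j: "j < n" by auto
    have ps: "\<And>l. l < m \<Longrightarrow> psd n (Gm n g l)" using g unfolding Gset_def by auto
    have ent: "\<And>l a b. a < n \<Longrightarrow> b < n \<Longrightarrow> Gm n g l $$ (a,b) = g (l,a,b)" unfolding Gm_def by simp
    have diag: "Im (g (l,a,a)) = 0 \<and> 0 \<le> Re (g (l,a,a)) \<and> Re (g (l,a,a)) \<le> 1" if a: "a < n" and l: "l < m" for a l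
    proof -
      have nn: "\<And>l. l < m \<Longrightarrow> Im (g (l,a,a)) = 0 \<and> 0 \<le> Re (g (l,a,a))"
        using psd_diag[OF ps a] ent[OF a a] by metis
      have "(\<Sum>l<m. g (l,a,a)) = 1" using g a unfolding Gset_def by auto
      hence "(\<Sum>l<m. Re (g (l,a,a))) = 1" by (metis Re_sum one_complex.sel(1))
      moreover have "Re (g (l,a,a)) \<le> (\<Sum>l<m. Re (g (l,a,a)))"
        by (rule member_le_sum) (use l nn in auto)
      ultimately show ?thesis using nn[OF l] by simp
    qed
    show ?thesis
    proof (cases "i = j")
      case True
      have "g (l,i,i) = complex_of_real (Re (g (l,i,i)))" using diag[OF i l] by (simp add: complex_eq_iff)
      hence "cmod (g (l,i,i)) = Re (g (l,i,i))" using diag[OF i l] by (metis norm_of_real abs_of_nonneg)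
      thus ?thesis using diag[OF i l] x True by simp
    next
      case False
      have "2 * cmod (Gm n g l $$ (i,j)) \<le> Re (Gm n g l $$ (i,i)) + Re (Gm n g l $$ (j,j))"
        by (rule psd_offdiag[OF ps[OF l] i j False])
      thus ?thesis using diag[OF i l] diag[OF j l] ent[OF i j] ent[OF i i] ent[OF j j] x by simp
    qed
  qed
qed

lemma compact_Gset: "compact (Gset m n)"
proof -
  have "Gset m n = {g. \<forall>x. g x \<in> csq} \<inter> Gset m n" using Gset_bound in_csq by blast
  moreover have "compact ({g :: nat \<times> nat \<times> nat \<Rightarrow> complex. \<forall>x. g x \<in> csq} \<inter> Gset m n)"
    by (rule compact_Int_closed[OF compact_box[OF compact_csq] closed_Gset])
  ultimately show ?thesis by simp
qed

lemma hfG_comb: "hfG n (\<lambda>x. a * g0 x + b * g x) l f = a * hfG n g0 l f + b * hfG n g l f"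
  unfolding hfG_def by (simp add: sum.distrib sum_distrib_left algebra_simps)

lemma Gset_convex:
  assumes g0: "g0 \<in> Gset m n" and g: "g \<in> Gset m n" and t: "0 \<le> t" "t \<le> 1"
  shows "(\<lambda>x. complex_of_real (1 - t) * g0 x + complex_of_real t * g x) \<in> Gset m n"
  unfolding Gset_def
proof (intro CollectI conjI allI impI)
  fix l i j assume "\<not> (l < m \<and> i < n \<and> j < n)"
  thus "complex_of_real (1 - t) * g0 (l,i,j) + complex_of_real t * g (l,i,j) = 0" using g0 g unfolding Gset_def by auto
next
  fix l assume l: "l < m"
  have p0: "psd n (Gm n g0 l)" and p1: "psd n (Gm n g l)" using g0 g l unfolding Gset_def by auto
  show "psd n (Gm n (\<lambda>x. complex_of_real (1 - t) * g0 x + complex_of_real t * g x) l)"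
    unfolding psd_Gm hfG_comb using p0 p1 t unfolding psd_Gm by simp
next
  fix i j assume ij: "i < n" "j < n"
  have "(\<Sum>l<m. complex_of_real (1 - t) * g0 (l,i,j) + complex_of_real t * g (l,i,j)) =
    complex_of_real (1 - t) * (\<Sum>l<m. g0 (l,i,j)) + complex_of_real t * (\<Sum>l<m. g (l,i,j))"
    by (simp add: sum.distrib sum_distrib_left)
  also have "\<dots> = (if i = j then 1 else 0)" using g0 g ij unfolding Gset_def by (auto simp: algebra_simps)
  finally show "(\<Sum>l<m. complex_of_real (1 - t) * g0 (l,i,j) + complex_of_real t * g (l,i,j)) = (if i = j then 1 else 0)" .
qed


lemma ip_scale_right: "ip n f (\<lambda>i. b * g i) = b * ip n f g"
  unfolding ip_def by (simp add: sum_distrib_left mult_ac)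

lemma deph:
  assumes N': "CPTP dA d N'"
    and ab: "\<forall>\<rho> \<sigma>. density dA \<rho> \<and> density dA \<sigma> \<longrightarrow> N' \<rho> * N' \<sigma> = N' \<sigma> * N' \<rho>"
  shows "\<exists>u. onb d d u \<and> (\<forall>X\<in>carrier_mat dA dA. N' X = mp d d d (\<lambda>l. rk d (u l)) (\<lambda>l. rk d (u l)) (N' X))"
proof -
  define Ks where "Ks = N' ` Rset dA"
  have fin: "finite Ks" unfolding Ks_def using finite_Rset by simp
  have psdK: "\<And>\<rho>. \<rho> \<in> Rset dA \<Longrightarrow> psd d (N' \<rho>)"
    using Rset_density cp_pos[OF N'] unfolding density_def by blast
  have hs: "\<forall>K\<in>Ks. herm d K" unfolding Ks_def using psdK psd_herm by blast
  have cm: "\<forall>K\<in>Ks. \<forall>L\<in>Ks. K * L = L * K" unfolding Ks_def using ab Rset_density by blast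
  obtain u where on: "onb d d u" and ev: "\<forall>l<d. \<forall>K\<in>Ks. \<exists>\<mu>. mv d K (u l) = (\<lambda>i. \<mu> * u l i)"
    using onb_exists[OF fin hs cm] by blast
  have LN': "lin_map dA d N'" using N' by (simp add: CPTP_def)
  have L2: "lin_map dA d (\<lambda>X. mp d d d (\<lambda>l. rk d (u l)) (\<lambda>l. rk d (u l)) (N' X))"
    by (rule lin_comp[OF LN' mp_lin])
  have R: "\<forall>\<rho>\<in>Rset dA. N' \<rho> = mp d d d (\<lambda>l. rk d (u l)) (\<lambda>l. rk d (u l)) (N' \<rho>)"
  proof
    fix \<rho> assume \<rho>: "\<rho> \<in> Rset dA"
    define K where "K = N' \<rho>"
    have Kc: "K \<in> carrier_mat d d" unfolding K_def using psdK[OF \<rho>] psdD(3) by blast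
    have "\<forall>l<d. \<exists>\<mu>. mv d K (u l) = (\<lambda>i. \<mu> * u l i)" using ev \<rho> unfolding Ks_def K_def by blast
    then obtain \<mu> where \<mu>: "\<And>l. l < d \<Longrightarrow> mv d K (u l) = (\<lambda>i. \<mu> l * u l i)" by metis
    have tpl: "tp d (rk d (u l)) K = \<mu> l" if l: "l < d" for l
    proof -
      have "tp d (rk d (u l)) K = hf d K (u l)" by (simp add: tp_comm hf_as_tp)
      also have "\<dots> = ip d (u l) (\<lambda>i. \<mu> l * u l i)" unfolding hf_ip \<mu>[OF l] ..
      also have "\<dots> = \<mu> l" unfolding ip_scale_right using on l unfolding onb_def by simp
      finally show ?thesis .
    qed
    show "N' \<rho> = mp d d d (\<lambda>l. rk d (u l)) (\<lambda>l. rk d (u l)) (N' \<rho>)"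
      unfolding K_def[symmetric]
    proof (rule eq_matI)
      fix i j assume "i < dim_row (mp d d d (\<lambda>l. rk d (u l)) (\<lambda>l. rk d (u l)) K)"
        "j < dim_col (mp d d d (\<lambda>l. rk d (u l)) (\<lambda>l. rk d (u l)) K)"
      hence ij: "i < d" "j < d" unfolding mp_def by auto
      have "mp d d d (\<lambda>l. rk d (u l)) (\<lambda>l. rk d (u l)) K $$ (i,j) = (\<Sum>l<d. \<mu> l * (u l i * cnj (u l j)))"
        unfolding mp_def using ij tpl by (simp add: rk_def)
      also have "\<dots> = K $$ (i,j)" using spectral[OF on Kc \<mu> ij] by (simp add: mult.assoc)
      finally show "K $$ (i,j) = mp d d d (\<lambda>l. rk d (u l)) (\<lambda>l. rk d (u l)) K $$ (i,j)" by simp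
    qed (use Kc in \<open>auto simp: mp_def\<close>)
  qed
  have "\<forall>X\<in>carrier_mat dA dA. N' X = mp d d d (\<lambda>l. rk d (u l)) (\<lambda>l. rk d (u l)) (N' X)"
    using agree[OF LN' L2 R] by blast
  thus ?thesis using on by blast
qed

definition enc :: "nat \<Rightarrow> nat \<Rightarrow> (nat \<Rightarrow> complex mat) \<Rightarrow> (nat \<times> nat \<times> nat \<Rightarrow> complex)" where
  "enc m n P = (\<lambda>(l,i,j). if l < m \<and> i < n \<and> j < n then P l $$ (i,j) else 0)"

lemma enc_Gm: "P l \<in> carrier_mat n n \<Longrightarrow> l < m \<Longrightarrow> Gm n (enc m n P) l = P l"
  unfolding Gm_def enc_def by (intro eq_matI) auto

lemma enc_Gset:
  assumes P: "POVM n {..<m} P"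
  shows "enc m n P \<in> Gset m n"
  unfolding Gset_def
proof (intro CollectI conjI allI impI)
  fix l i j assume "\<not> (l < m \<and> i < n \<and> j < n)" thus "enc m n P (l,i,j) = 0" unfolding enc_def by auto
next
  fix l assume l: "l < m"
  have "psd n (P l)" using P l unfolding POVM_def by auto
  thus "psd n (Gm n (enc m n P) l)" using enc_Gm[OF psdD(3) l] by simp
next
  fix i j assume ij: "i < n" "j < n"
  have "(\<Sum>l<m. enc m n P (l,i,j)) = (\<Sum>l<m. P l $$ (i,j))" unfolding enc_def using ij by simp
  thus "(\<Sum>l<m. enc m n P (l,i,j)) = (if i = j then 1 else 0)" using P ij unfolding POVM_def by simp
qed

lemma Gset_POVM:
  assumes g: "g \<in> Gset m n"
  shows "POVM n {..<m} (Gm n g)"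
  unfolding POVM_def
proof (intro conjI ballI allI impI)
  fix l assume "l \<in> {..<m}" thus "psd n (Gm n g l)" using g unfolding Gset_def by auto
next
  fix i j assume ij: "i < n" "j < n"
  have "(\<Sum>l<m. Gm n g l $$ (i,j)) = (\<Sum>l<m. g (l,i,j))" unfolding Gm_def using ij by simp
  thus "(\<Sum>l\<in>{..<m}. Gm n g l $$ (i,j)) = (if i = j then 1 else 0)" using g ij unfolding Gset_def by simp
qed

locale sep_setup =
  fixes dA n m :: nat and N N' :: "complex mat \<Rightarrow> complex mat" and u :: "nat \<Rightarrow> nat \<Rightarrow> complex"
  assumes dA: "dA > 0" and nn: "n > 0" and mm: "m > 0" and N: "CPTP dA n N" and N': "CPTP dA m N'"
    and on: "onb m m u"
    and dph: "\<forall>X\<in>carrier_mat dA dA. N' X = mp m m m (\<lambda>l. rk m (u l)) (\<lambda>l. rk m (u l)) (N' X)"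
begin

definition Pi where "Pi l = rk m (u l)"
definition F where "F l = adj dA m N' (Pi l)"
definition A where "A g l = adj dA n N (Gm n g l)"
definition phi where "phi g = (\<Sum>l<m. \<Sum>a<dA. \<Sum>b<dA. (cmod (A g l $$ (a,b) - F l $$ (a,b)))^2)"

lemma LN: "lin_map dA n N" using N by (simp add: CPTP_def)
lemma LN': "lin_map dA m N'" using N' by (simp add: CPTP_def)

lemma Pi_psd: "psd m (Pi l)" unfolding Pi_def by (rule psd_rk)

lemma Pi_sum: "\<forall>i<m. \<forall>j<m. (\<Sum>l<m. Pi l $$ (i,j)) = (if i = j then 1 else 0)"
  unfolding Pi_def rk_def using onb_complete[OF on] by simp

lemma Pi_trace: "l < m \<Longrightarrow> mtrace (Pi l) = 1"
  unfolding Pi_def mtrace_rk using on unfolding onb_def by simp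

lemma Pi_POVM: "POVM m {..<m} Pi"
  unfolding POVM_def using Pi_psd Pi_sum by simp

lemma F_tp: "X \<in> carrier_mat dA dA \<Longrightarrow> tp dA (F l) X = tp m (Pi l) (N' X)"
  unfolding F_def by (rule adj_tp[OF LN'])

lemma A_tp: "X \<in> carrier_mat dA dA \<Longrightarrow> tp dA (A g l) X = tp n (Gm n g l) (N X)"
  unfolding A_def by (rule adj_tp[OF LN])

lemma A_entry: "a < dA \<Longrightarrow> b < dA \<Longrightarrow>
  A g l $$ (a,b) = (\<Sum>i<n. \<Sum>j<n. g (l,i,j) * N (E dA (b,a)) $$ (j,i))"
  unfolding A_def adj_def tp_def Gm_def by simp

lemma continuous_phi: "continuous_on S phi"
proof -
  have "phi = (\<lambda>g. \<Sum>l<m. \<Sum>a<dA. \<Sum>b<dA. (cmod ((\<Sum>i<n. \<Sum>j<n. g (l,i,j) * N (E dA (b,a)) $$ (j,i)) - F l $$ (a,b)))^2)"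
    unfolding phi_def by (intro ext sum.cong refl) (simp add: A_entry)
  moreover have "continuous_on S (\<lambda>g. \<Sum>l<m. \<Sum>a<dA. \<Sum>b<dA. (cmod ((\<Sum>i<n. \<Sum>j<n. g (l,i,j) * N (E dA (b,a)) $$ (j,i)) - F l $$ (a,b)))^2)"
    by (intro continuous_intros)
  ultimately show ?thesis by simp
qed

lemma exact_case:
  assumes g0: "g0 \<in> Gset m n" and eq: "\<forall>l<m. A g0 l = F l"
  shows "\<exists>C. CPTP n m C \<and> (\<forall>X \<in> carrier_mat dA dA. N' X = C (N X))"
proof -
  define C where "C = mp n m m (Gm n g0) Pi"
  have cp: "CPTP n m C" unfolding CPTP_def C_def
  proof (intro conjI)
    show "lin_map n m (mp n m m (Gm n g0) Pi)" by (rule mp_lin)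
    show "completely_positive n m (mp n m m (Gm n g0) Pi)"
      unfolding Pi_def[abs_def] by (rule mp_cp) (use g0 in \<open>auto simp: Gset_def\<close>)
    show "trace_preserving n (mp n m m (Gm n g0) Pi)"
    proof (rule mp_tp)
      show "\<forall>i<n. \<forall>j<n. (\<Sum>l<m. Gm n g0 l $$ (i,j)) = (if i = j then 1 else 0)"
        using Gset_POVM[OF g0] unfolding POVM_def by simp
      show "\<forall>l<m. Pi l \<in> carrier_mat m m \<and> mtrace (Pi l) = 1" using Pi_trace by (simp add: Pi_def)
    qed
  qed
  have "N' X = C (N X)" if X: "X \<in> carrier_mat dA dA" for X
  proof -
    have "N' X = mp m m m Pi Pi (N' X)" using dph X unfolding Pi_def[abs_def] by simp
    also have "\<dots> = C (N X)" unfolding C_def mp_def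
    proof (intro eq_matI)
      fix i j assume ij: "i < dim_row (mat m m (\<lambda>q. \<Sum>l<m. tp n (Gm n g0 l) (N X) * Pi l $$ q))"
        "j < dim_col (mat m m (\<lambda>q. \<Sum>l<m. tp n (Gm n g0 l) (N X) * Pi l $$ q))"
      have "\<And>l. l < m \<Longrightarrow> tp m (Pi l) (N' X) = tp n (Gm n g0 l) (N X)"
        using F_tp[OF X] A_tp[OF X] eq by metis
      thus "mat m m (\<lambda>q. \<Sum>l<m. tp m (Pi l) (N' X) * Pi l $$ q) $$ (i,j) =
            mat m m (\<lambda>q. \<Sum>l<m. tp n (Gm n g0 l) (N X) * Pi l $$ q) $$ (i,j)" using ij by simp
    qed auto
    finally show ?thesis .
  qed
  thus ?thesis using cp by blast
qed

end


lemma cmod_expand: "(cmod (w + complex_of_real t * v))^2 = (cmod w)^2 + 2*t*Re (cnj w * v) + t^2 * (cmod v)^2"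
  unfolding cmod_power2 by (simp add: power2_eq_square algebra_simps)

lemma neg_cmod_le_Re: "- cmod z \<le> Re z"
  using abs_Re_le_cmod[of z] by linarith

lemma small_t:
  fixes X Y :: real
  assumes "\<And>t. 0 < t \<Longrightarrow> t \<le> 1 \<Longrightarrow> 2 * X \<le> t * Y"
  shows "X \<le> 0"
proof (rule ccontr)
  assume "\<not> X \<le> 0"
  hence X: "X > 0" by simp
  define t where "t = min 1 (X / (\<bar>Y\<bar> + 1))"
  have t0: "0 < t" unfolding t_def using X by simp
  have t1: "t \<le> 1" unfolding t_def by simp
  have "t * Y \<le> t * \<bar>Y\<bar>" using t0 by (simp add: mult_left_mono)
  also have "\<dots> \<le> (X / (\<bar>Y\<bar> + 1)) * \<bar>Y\<bar>" unfolding t_def by (intro mult_right_mono) auto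
  also have "\<dots> < X"
  proof -
    have "(X / (\<bar>Y\<bar> + 1)) * \<bar>Y\<bar> = X * (\<bar>Y\<bar> / (\<bar>Y\<bar> + 1))" by simp
    also have "\<dots> < X * 1" using X by (intro mult_strict_left_mono) auto
    finally show ?thesis by simp
  qed
  finally have "t * Y < X" .
  moreover have "2 * X \<le> t * Y" by (rule assms[OF t0 t1])
  ultimately show False using X by simp
qed

lemma tp_herm_re:
  assumes D: "herm n D"
  shows "Re (tp n M D) = (\<Sum>a<n. \<Sum>b<n. Re (cnj (D $$ (a,b)) * M $$ (a,b)))"
  unfolding tp_def Re_sum using hermD[OF D] by (intro sum.cong refl) (simp add: mult.commute)

lemma tp_smult_right: "X \<in> carrier_mat n n \<Longrightarrow> tp n M (c \<cdot>\<^sub>m X) = c * tp n M X"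
  unfolding tp_def by (simp add: sum_distrib_left mult_ac)

lemma tp_shift:
  assumes Dc: "D \<in> carrier_mat n n" and M: "M \<in> carrier_mat n n"
  shows "tp n M (D + complex_of_real c \<cdot>\<^sub>m 1\<^sub>m n) = tp n M D + complex_of_real c * mtrace M"
proof -
  have "tp n M (D + complex_of_real c \<cdot>\<^sub>m 1\<^sub>m n) = (\<Sum>i<n. \<Sum>j<n. M $$ (i,j) * D $$ (j,i) + (if i = j then complex_of_real c * M $$ (i,j) else 0))"
    unfolding tp_def using Dc by (intro sum.cong refl) (auto simp: algebra_simps)
  also have "\<dots> = tp n M D + complex_of_real c * mtrace M"
    unfolding tp_def mtrace_carrier[OF M] by (simp add: sum.distrib sum_distrib_left)
  finally show ?thesis .
qed

lemma hf_bound: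
  assumes Dc: "D \<in> carrier_mat n n"
  shows "cmod (hf n D f) \<le> (\<Sum>a<n. \<Sum>b<n. cmod (D $$ (a,b))) * Re (ip n f f)"
proof -
  have sq: "(cmod (f a))^2 \<le> Re (ip n f f)" if "a < n" for a
  proof -
    have "Re (ip n f f) = (\<Sum>i<n. (cmod (f i))^2)" using ip_self_real(3)[of n f] by simp
    moreover have "(cmod (f a))^2 \<le> (\<Sum>i<n. (cmod (f i))^2)" by (rule member_le_sum) (use that in auto)
    ultimately show ?thesis by simp
  qed
  have pr: "cmod (f a) * cmod (f b) \<le> Re (ip n f f)" if "a < n" "b < n" for a b
  proof -
    have "2 * (cmod (f a) * cmod (f b)) \<le> (cmod (f a))^2 + (cmod (f b))^2"
      using sum_squares_bound[of "cmod (f a)" "cmod (f b)"] by (simp add: power2_eq_square)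
    thus ?thesis using sq[OF that(1)] sq[OF that(2)] by simp
  qed
  have "cmod (hf n D f) \<le> (\<Sum>a<n. \<Sum>b<n. cmod (cnj (f a) * D $$ (a,b) * f b))"
    unfolding hf_def by (rule order_trans[OF norm_sum sum_mono]) (rule norm_sum)
  also have "\<dots> \<le> (\<Sum>a<n. \<Sum>b<n. cmod (D $$ (a,b)) * Re (ip n f f))"
  proof (intro sum_mono)
    fix a b assume "a \<in> {..<n}" "b \<in> {..<n}"
    hence ab: "a < n" "b < n" by auto
    have "cmod (cnj (f a) * D $$ (a,b) * f b) = cmod (D $$ (a,b)) * (cmod (f a) * cmod (f b))"
      by (simp add: norm_mult)
    also have "\<dots> \<le> cmod (D $$ (a,b)) * Re (ip n f f)" by (intro mult_left_mono pr[OF ab]) simp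
    finally show "cmod (cnj (f a) * D $$ (a,b) * f b) \<le> cmod (D $$ (a,b)) * Re (ip n f f)" .
  qed
  also have "\<dots> = (\<Sum>a<n. \<Sum>b<n. cmod (D $$ (a,b))) * Re (ip n f f)" by (simp add: sum_distrib_right)
  finally show ?thesis .
qed

lemma shift_psd:
  assumes D: "herm n D" and c: "(\<Sum>a<n. \<Sum>b<n. cmod (D $$ (a,b))) \<le> c"
  shows "psd n (D + complex_of_real c \<cdot>\<^sub>m 1\<^sub>m n)"
  unfolding psd_iff
proof (intro conjI allI)
  have Dc: "D \<in> carrier_mat n n" using D by (simp add: herm_def)
  show "D + complex_of_real c \<cdot>\<^sub>m 1\<^sub>m n \<in> carrier_mat n n" using Dc by simp
  fix f
  have e: "hf n (D + complex_of_real c \<cdot>\<^sub>m 1\<^sub>m n) f = hf n D f + complex_of_real c * ip n f f"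
  proof -
    have "hf n (D + complex_of_real c \<cdot>\<^sub>m 1\<^sub>m n) f = (\<Sum>i<n. \<Sum>j<n. cnj (f i) * D $$ (i,j) * f j +
        (if i = j then complex_of_real c * (cnj (f i) * f j) else 0))"
      unfolding hf_def using Dc by (intro sum.cong refl) (auto simp: algebra_simps)
    also have "\<dots> = hf n D f + complex_of_real c * ip n f f"
      unfolding hf_def ip_def by (simp add: sum.distrib sum_distrib_left)
    finally show ?thesis .
  qed
  have b: "cmod (hf n D f) \<le> c * Re (ip n f f)"
    using hf_bound[OF Dc, of f] c ip_self_real(2)[of n f] by (meson mult_right_mono order_trans)
  have "- Re (hf n D f) \<le> cmod (hf n D f)" using abs_Re_le_cmod[of "hf n D f"] by linarith
  thus "0 \<le> Re (hf n (D + complex_of_real c \<cdot>\<^sub>m 1\<^sub>m n) f)" unfolding e using b by simp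
  show "Im (hf n (D + complex_of_real c \<cdot>\<^sub>m 1\<^sub>m n) f) = 0"
    unfolding e using herm_hf_real[OF D] ip_self_real(1)[of n f] by simp
qed

context sep_setup
begin

lemma A_psd: "g \<in> Gset m n \<Longrightarrow> l < m \<Longrightarrow> psd dA (A g l)"
  unfolding A_def using Gset_POVM adj_psd[OF N] unfolding POVM_def by blast

lemma F_psd: "psd dA (F l)"
  unfolding F_def by (rule adj_psd[OF N' Pi_psd])

lemma A_comb: "a' < dA \<Longrightarrow> b' < dA \<Longrightarrow>
  A (\<lambda>x. a * g0 x + b * g x) l $$ (a',b') = a * A g0 l $$ (a',b') + b * A g l $$ (a',b')"
  unfolding A_entry by (simp add: sum.distrib sum_distrib_left algebra_simps)

lemma var_ineq:
  assumes g0: "g0 \<in> Gset m n" and mn: "\<forall>g\<in>Gset m n. phi g0 \<le> phi g" and g: "g \<in> Gset m n"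
  shows "(\<Sum>l<m. \<Sum>a<dA. \<Sum>b<dA. Re (cnj (F l $$ (a,b) - A g0 l $$ (a,b)) * (A g l $$ (a,b) - A g0 l $$ (a,b)))) \<le> 0"
proof -
  define P0 where "P0 l a b = (cmod (A g0 l $$ (a,b) - F l $$ (a,b)))^2" for l a b
  define Rf where "Rf l a b = Re (cnj (F l $$ (a,b) - A g0 l $$ (a,b)) * (A g l $$ (a,b) - A g0 l $$ (a,b)))" for l a b
  define Qf where "Qf l a b = (cmod (A g l $$ (a,b) - A g0 l $$ (a,b)))^2" for l a b
  define X where "X = (\<Sum>l<m. \<Sum>a<dA. \<Sum>b<dA. Rf l a b)"
  define Y where "Y = (\<Sum>l<m. \<Sum>a<dA. \<Sum>b<dA. Qf l a b)"
  have "2 * X \<le> t * Y" if t: "0 < t" "t \<le> 1" for t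
  proof -
    define gt where "gt = (\<lambda>x. complex_of_real (1 - t) * g0 x + complex_of_real t * g x)"
    have gtG: "gt \<in> Gset m n" unfolding gt_def using Gset_convex[OF g0 g] t by simp
    have trm: "(cmod (A gt l $$ (a,b) - F l $$ (a,b)))^2 = P0 l a b - 2 * t * Rf l a b + t^2 * Qf l a b"
      if ab: "a < dA" "b < dA" for l a b
    proof -
      define w where "w = A g0 l $$ (a,b) - F l $$ (a,b)"
      define v where "v = A g l $$ (a,b) - A g0 l $$ (a,b)"
      have eq: "A gt l $$ (a,b) - F l $$ (a,b) = w + complex_of_real t * v"
        unfolding w_def v_def gt_def A_comb[OF ab] by (simp add: algebra_simps)
      have e1: "(cmod (A gt l $$ (a,b) - F l $$ (a,b)))^2 = (cmod w)^2 + 2*t*Re (cnj w * v) + t^2 * (cmod v)^2"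
        unfolding eq by (rule cmod_expand)
      have e2: "Re (cnj w * v) = - Rf l a b"
        unfolding w_def v_def Rf_def by (simp add: algebra_simps)
      have e3: "(cmod w)^2 = P0 l a b" "(cmod v)^2 = Qf l a b" unfolding w_def v_def P0_def Qf_def by simp_all
      show ?thesis unfolding e1 e2 e3 by simp
    qed
    have "phi gt = (\<Sum>l<m. \<Sum>a<dA. \<Sum>b<dA. P0 l a b - 2 * t * Rf l a b + t^2 * Qf l a b)"
      unfolding phi_def by (intro sum.cong refl) (simp add: trm)
    also have "\<dots> = phi g0 - 2 * t * X + t^2 * Y"
      unfolding phi_def X_def Y_def P0_def[symmetric]
      by (simp add: sum.distrib sum_subtractf sum_distrib_left)
    finally have "phi gt = phi g0 - 2 * t * X + t^2 * Y" .
    moreover have "phi g0 \<le> phi gt" using mn gtG by blast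
    ultimately have "2 * t * X \<le> t^2 * Y" by simp
    hence "t * (2 * X) \<le> t * (t * Y)" by (simp add: power2_eq_square mult_ac)
    thus ?thesis using t by simp
  qed
  hence "X \<le> 0" by (rule small_t)
  thus ?thesis unfolding X_def Rf_def .
qed

lemma sep_contra:
  assumes g0: "g0 \<in> Gset m n" and mn: "\<forall>g\<in>Gset m n. phi g0 \<le> phi g" and pos: "phi g0 > 0"
    and mi: "more_informative dA n N m N'"
  shows False
proof -
  define D where "D l = F l - A g0 l" for l
  have Dc: "D l \<in> carrier_mat dA dA" for l unfolding D_def F_def A_def carrier_mat_def by (simp add: adj_def)
  have Dent: "D l $$ (a,b) = F l $$ (a,b) - A g0 l $$ (a,b)" if "a < dA" "b < dA" for l a b
    unfolding D_def F_def A_def using that by (simp add: adj_def)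
  have Dh: "herm dA (D l)" if l: "l < m" for l
    unfolding herm_def
  proof (intro conjI allI impI Dc)
    fix a b assume ab: "a < dA" "b < dA"
    have h1: "herm dA (F l)" and h2: "herm dA (A g0 l)" using psd_herm F_psd A_psd[OF g0 l] by auto
    show "D l $$ (a,b) = cnj (D l $$ (b,a))"
      unfolding Dent[OF ab] Dent[OF ab(2,1)] using hermD[OF h1 ab(2,1)] hermD[OF h2 ab(2,1)] by simp
  qed
  have phi0: "phi g0 = (\<Sum>l<m. \<Sum>a<dA. \<Sum>b<dA. Re (cnj (D l $$ (a,b)) * D l $$ (a,b)))"
    unfolding phi_def
  proof (intro sum.cong refl)
    fix l a b assume "a \<in> {..<dA}" "b \<in> {..<dA}"
    hence ab: "a < dA" "b < dA" by auto
    have "(cmod (A g0 l $$ (a,b) - F l $$ (a,b)))^2 = (cmod (D l $$ (a,b)))^2"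
      unfolding Dent[OF ab] by (simp add: norm_minus_commute)
    also have "\<dots> = Re (cnj (D l $$ (a,b)) * D l $$ (a,b))"
      using complex_norm_square[of "D l $$ (a,b)"] by (metis Re_complex_of_real mult.commute)
    finally show "(cmod (A g0 l $$ (a,b) - F l $$ (a,b)))^2 = Re (cnj (D l $$ (a,b)) * D l $$ (a,b))" .
  qed
  have key: "(\<Sum>l<m. Re (tp dA (A g l) (D l))) \<le> (\<Sum>l<m. Re (tp dA (F l) (D l))) - phi g0"
    if g: "g \<in> Gset m n" for g
  proof -
    have v: "(\<Sum>l<m. \<Sum>a<dA. \<Sum>b<dA. Re (cnj (D l $$ (a,b)) * A g l $$ (a,b)) -
          Re (cnj (D l $$ (a,b)) * A g0 l $$ (a,b))) \<le> 0"
      using var_ineq[OF g0 mn g] by (simp add: Dent algebra_simps)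
    have w: "(\<Sum>l<m. \<Sum>a<dA. \<Sum>b<dA. Re (cnj (D l $$ (a,b)) * A g0 l $$ (a,b))) =
      (\<Sum>l<m. \<Sum>a<dA. \<Sum>b<dA. Re (cnj (D l $$ (a,b)) * F l $$ (a,b))) - phi g0"
      unfolding phi0 by (simp add: Dent sum_subtractf[symmetric] algebra_simps)
    have "(\<Sum>l<m. Re (tp dA (A g l) (D l))) = (\<Sum>l<m. \<Sum>a<dA. \<Sum>b<dA. Re (cnj (D l $$ (a,b)) * A g l $$ (a,b)))"
      by (intro sum.cong refl) (simp add: tp_herm_re[OF Dh])
    moreover have "(\<Sum>l<m. Re (tp dA (F l) (D l))) = (\<Sum>l<m. \<Sum>a<dA. \<Sum>b<dA. Re (cnj (D l $$ (a,b)) * F l $$ (a,b)))"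
      by (intro sum.cong refl) (simp add: tp_herm_re[OF Dh])
    ultimately show ?thesis using v w by (simp add: sum_subtractf)
  qed
  define S where "S = (\<Sum>l<m. \<Sum>a<dA. \<Sum>b<dA. cmod (D l $$ (a,b)))"
  define c where "c = S + 1"
  have S0: "0 \<le> S" unfolding S_def by (intro sum_nonneg) auto
  have Sl: "(\<Sum>a<dA. \<Sum>b<dA. cmod (D l $$ (a,b))) \<le> S" if "l < m" for l
    unfolding S_def by (rule member_le_sum[where f = "\<lambda>l. \<Sum>a<dA. \<Sum>b<dA. cmod (D l $$ (a,b))"])
      (use that in \<open>auto intro!: sum_nonneg\<close>)
  define H where "H l = D l + complex_of_real c \<cdot>\<^sub>m 1\<^sub>m dA" for l
  have Hc: "H l \<in> carrier_mat dA dA" for l unfolding H_def using Dc by simp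
  have Hpsd: "psd dA (H l)" if l: "l < m" for l
    unfolding H_def by (rule shift_psd[OF Dh[OF l]]) (use Sl[OF l] in \<open>simp add: c_def\<close>)
  define h where "h l = mtrace (H l)" for l
  have hprops: "Im (h l) = 0 \<and> 1 \<le> Re (h l)" if l: "l < m" for l
  proof -
    have "h l = (\<Sum>a<dA. H l $$ (a,a))" unfolding h_def by (rule mtrace_carrier[OF Hc])
    also have "\<dots> = (\<Sum>a<dA. D l $$ (a,a) + complex_of_real c)"
      using Dc by (intro sum.cong refl) (simp add: H_def)
    finally have "h l = (\<Sum>a<dA. D l $$ (a,a) + complex_of_real c)" .
    hence he: "h l = mtrace (D l) + of_nat dA * complex_of_real c"
      unfolding mtrace_carrier[OF Dc] by (simp add: sum.distrib)
    have dr: "Im (D l $$ (a,a)) = 0" if "a < dA" for a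
      using hermD[OF Dh[OF l] that that] by (metis Reals_cnj_iff complex_is_Real_iff)
    have "Im (mtrace (D l)) = 0" unfolding mtrace_carrier[OF Dc] Im_sum using dr by simp
    moreover have "- S \<le> Re (mtrace (D l))"
    proof -
      have "(\<Sum>a<dA. cmod (D l $$ (a,a))) \<le> (\<Sum>a<dA. \<Sum>b<dA. cmod (D l $$ (a,b)))"
        by (intro sum_mono member_le_sum[where f = "\<lambda>b. cmod (D l $$ (_,b))"]) auto
      moreover have "- (\<Sum>a<dA. cmod (D l $$ (a,a))) \<le> (\<Sum>a<dA. Re (D l $$ (a,a)))"
        unfolding sum_negf[symmetric] by (intro sum_mono) (rule neg_cmod_le_Re)
      ultimately show ?thesis unfolding mtrace_carrier[OF Dc] Re_sum using Sl[OF l] by linarith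
    qed
    moreover have "S + 1 \<le> (S + 1) * real dA" using dA S0 by simp
    ultimately show ?thesis unfolding he c_def by (simp add: mult.commute)
  qed
  define r where "r l = Re (h l)" for l
  have r1: "1 \<le> r l" if "l < m" for l using hprops[OF that] unfolding r_def by simp
  have hr: "h l = complex_of_real (r l)" if "l < m" for l
    using hprops[OF that] unfolding r_def by (simp add: complex_eq_iff)
  define Tt where "Tt = (\<Sum>l<m. r l)"
  have Tt: "0 < Tt" unfolding Tt_def using mm r1 by (intro sum_pos) (auto, fastforce)
  define p where "p l = r l / Tt" for l
  define \<rho> where "\<rho> l = complex_of_real (1 / r l) \<cdot>\<^sub>m H l" for l
  have \<rho>c: "\<rho> l \<in> carrier_mat dA dA" for l unfolding \<rho>_def using Hc by simp
  have ens: "ensemble dA {..<m} p \<rho>"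
    unfolding ensemble_def
  proof (intro conjI ballI)
    show "finite {..<m}" by simp
    fix l assume "l \<in> {..<m}"
    hence l: "l < m" by simp
    show "0 \<le> p l" unfolding p_def using r1[OF l] Tt by simp
    have "mtrace (\<rho> l) = complex_of_real (1 / r l) * h l" unfolding \<rho>_def h_def by (rule mtrace_smult[OF Hc])
    also have "\<dots> = 1" using hr[OF l] r1[OF l] by simp
    finally show "density dA (\<rho> l)" unfolding density_def \<rho>_def
      using psd_scale[OF Hpsd[OF l], of "1 / r l"] r1[OF l] by simp
  next
    show "(\<Sum>l\<in>{..<m}. p l) = 1" unfolding p_def Tt_def using Tt unfolding Tt_def
      by (simp add: sum_divide_distrib[symmetric])
  qed
  have tprho: "tp dA M (\<rho> l) = complex_of_real (1 / r l) * tp dA M (H l)" for M l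
    unfolding \<rho>_def by (rule tp_smult_right[OF Hc])
  have sumtr: "(\<Sum>l<m. Re (mtrace (M l))) = real dA"
    if MP: "\<forall>a<dA. \<forall>b<dA. (\<Sum>l<m. M l $$ (a,b)) = (if a = b then 1 else 0)"
      and Mc: "\<forall>l<m. M l \<in> carrier_mat dA dA" for M
  proof -
    have "(\<Sum>l<m. mtrace (M l)) = (\<Sum>l<m. \<Sum>a<dA. M l $$ (a,a))"
      using Mc by (intro sum.cong refl) (simp add: mtrace_carrier)
    also have "\<dots> = (\<Sum>a<dA. \<Sum>l<m. M l $$ (a,a))" by (rule sum.swap)
    also have "\<dots> = (\<Sum>a<dA. 1)" using MP by simp
    finally show ?thesis by (simp add: Re_sum[symmetric])
  qed
  have sumH: "(\<Sum>l<m. Re (tp dA (M l) (H l))) = (\<Sum>l<m. Re (tp dA (M l) (D l))) + c * real dA"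
    if MP: "\<forall>a<dA. \<forall>b<dA. (\<Sum>l<m. M l $$ (a,b)) = (if a = b then 1 else 0)"
      and Mc: "\<forall>l<m. M l \<in> carrier_mat dA dA" for M
  proof -
    have "(\<Sum>l<m. Re (tp dA (M l) (H l))) = (\<Sum>l<m. Re (tp dA (M l) (D l)) + c * Re (mtrace (M l)))"
      using Mc unfolding H_def by (intro sum.cong refl) (simp add: tp_shift[OF Dc])
    also have "\<dots> = (\<Sum>l<m. Re (tp dA (M l) (D l))) + c * (\<Sum>l<m. Re (mtrace (M l)))"
      by (simp add: sum.distrib sum_distrib_left)
    finally show ?thesis using sumtr[OF MP Mc] by simp
  qed
  have AP: "\<forall>a<dA. \<forall>b<dA. (\<Sum>l<m. A g l $$ (a,b)) = (if a = b then 1 else 0)" if g: "g \<in> Gset m n" for g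
    unfolding A_def using adj_povm_sum[OF N, of "{..<m}" "Gm n g"] Gset_POVM[OF g] unfolding POVM_def by simp
  have FP: "\<forall>a<dA. \<forall>b<dA. (\<Sum>l<m. F l $$ (a,b)) = (if a = b then 1 else 0)"
    unfolding F_def using adj_povm_sum[OF N', of "{..<m}" Pi] Pi_POVM unfolding POVM_def by simp
  have Ac: "A g l \<in> carrier_mat dA dA" for g l unfolding A_def by simp
  have Fc: "F l \<in> carrier_mat dA dA" for l unfolding F_def by simp
  define \<beta> where "\<beta> = (\<Sum>l<m. Re (tp dA (F l) (H l))) / Tt"
  have keyH: "(\<Sum>l<m. Re (tp dA (A g l) (H l))) \<le> (\<Sum>l<m. Re (tp dA (F l) (H l))) - phi g0"
    if g: "g \<in> Gset m n" for g
    using key[OF g] sumH[OF AP[OF g]] sumH[OF FP] Ac Fc by simp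
  have reval: "p l * Re (complex_of_real (1 / r l) * z) = Re z / Tt" if l: "l < m" for l z
    unfolding p_def using r1[OF l] by simp
  have upper: "v \<le> \<beta> - phi g0 / Tt" if v: "v \<in> GS n {..<m} p (\<lambda>l. N (\<rho> l))" for v
  proof -
    obtain P where P: "POVM n {..<m} P" and ve: "v = (\<Sum>l\<in>{..<m}. p l * Re (mtrace (P l * N (\<rho> l))))"
      using v unfolding GS_def by blast
    define g where "g = enc m n P"
    have gG: "g \<in> Gset m n" unfolding g_def by (rule enc_Gset[OF P])
    have Pc: "P l \<in> carrier_mat n n" if "l < m" for l using P that psdD(3) unfolding POVM_def by blast
    have "mtrace (P l * N (\<rho> l)) = complex_of_real (1 / r l) * tp dA (A g l) (H l)" if l: "l < m" for l
    proof -
      have "mtrace (P l * N (\<rho> l)) = tp n (P l) (N (\<rho> l))"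
        by (rule mtrace_mult[OF Pc[OF l] lin_carrier[OF LN \<rho>c]])
      also have "\<dots> = tp n (Gm n g l) (N (\<rho> l))" unfolding g_def using enc_Gm[where P = P and l = l and n = n and m = m, OF Pc[OF l] l] by simp
      also have "\<dots> = tp dA (A g l) (\<rho> l)" by (rule A_tp[OF \<rho>c, symmetric])
      finally show ?thesis unfolding tprho .
    qed
    hence "v = (\<Sum>l<m. Re (tp dA (A g l) (H l)) / Tt)" unfolding ve using reval by simp
    also have "\<dots> = (\<Sum>l<m. Re (tp dA (A g l) (H l))) / Tt" by (simp add: sum_divide_distrib)
    also have "\<dots> \<le> ((\<Sum>l<m. Re (tp dA (F l) (H l))) - phi g0) / Tt"
      using keyH[OF gG] Tt by (simp add: divide_right_mono)
    also have "\<dots> = \<beta> - phi g0 / Tt" unfolding \<beta>_def by (simp add: diff_divide_distrib)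
    finally show ?thesis .
  qed
  have betamem: "\<beta> \<in> GS m {..<m} p (\<lambda>l. N' (\<rho> l))"
  proof -
    have "mtrace (Pi l * N' (\<rho> l)) = complex_of_real (1 / r l) * tp dA (F l) (H l)" if l: "l < m" for l
    proof -
      have "mtrace (Pi l * N' (\<rho> l)) = tp m (Pi l) (N' (\<rho> l))"
        by (rule mtrace_mult[OF psdD(3)[OF Pi_psd] lin_carrier[OF LN' \<rho>c]])
      also have "\<dots> = tp dA (F l) (\<rho> l)" by (rule F_tp[OF \<rho>c, symmetric])
      finally show ?thesis unfolding tprho .
    qed
    hence "(\<Sum>l\<in>{..<m}. p l * Re (mtrace (Pi l * N' (\<rho> l)))) = (\<Sum>l<m. Re (tp dA (F l) (H l)) / Tt)"
      using reval by simp
    also have "\<dots> = \<beta>" unfolding \<beta>_def by (simp add: sum_divide_distrib)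
    finally show ?thesis unfolding GS_def using Pi_POVM by blast
  qed
  have ensd: "finite {..<m}" "\<forall>l\<in>{..<m}. 0 \<le> p l" "(\<Sum>l\<in>{..<m}. p l) = 1" "\<forall>l\<in>{..<m}. density dA (\<rho> l)"
    using ens unfolding ensemble_def by auto
  have dN': "\<forall>l\<in>{..<m}. density m (N' (\<rho> l))" using ensd(4) cp_density[OF N'] by blast
  have dN: "\<forall>l\<in>{..<m}. density n (N (\<rho> l))" using ensd(4) cp_density[OF N] by blast
  have lo: "\<beta> \<le> P_guess m {..<m} p (\<lambda>l. N' (\<rho> l))"
    unfolding P_guess_GS
    by (rule cSup_upper[OF betamem], rule bdd_aboveI, rule GS_bound[OF ensd(1-3) dN'])
  have up: "P_guess n {..<m} p (\<lambda>l. N (\<rho> l)) \<le> \<beta> - phi g0 / Tt"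
    unfolding P_guess_GS
    by (rule cSup_least[OF GS_ne[OF ensd(1)]]) (use mm upper in auto)
  have "P_guess m {..<m} p (\<lambda>l. N' (\<rho> l)) \<le> P_guess n {..<m} p (\<lambda>l. N (\<rho> l))"
    using mi ens unfolding more_informative_def by blast
  hence "\<beta> \<le> \<beta> - phi g0 / Tt" using lo up by linarith
  moreover have "phi g0 / Tt > 0" using pos Tt by simp
  ultimately show False by linarith
qed

end


theorem lemma2:
  fixes dA dB dB' :: nat and N N' :: "complex mat \<Rightarrow> complex mat"
  assumes "dA > 0" and "dB > 0" and "dB' > 0"
    and "CPTP dA dB N" and "CPTP dA dB' N'"
    and abelian: "\<forall>\<rho> \<sigma>. density dA \<rho> \<and> density dA \<sigma> \<longrightarrow> N' \<rho> * N' \<sigma> = N' \<sigma> * N' \<rho>"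
  shows "more_informative dA dB N dB' N' \<longleftrightarrow>
    (\<exists>C. CPTP dB dB' C \<and> (\<forall>X \<in> carrier_mat dA dA. N' X = C (N X)))"
proof
  assume mi: "more_informative dA dB N dB' N'"
  obtain u where on: "onb dB' dB' u"
    and dph: "\<forall>X\<in>carrier_mat dA dA. N' X = mp dB' dB' dB' (\<lambda>l. rk dB' (u l)) (\<lambda>l. rk dB' (u l)) (N' X)"
    using deph[OF assms(5) abelian] by blast
  interpret S: sep_setup dA dB dB' N N' u
    using assms on dph by unfold_locales auto
  have "enc dB' dB (\<lambda>x. if x = 0 then 1\<^sub>m dB else 0\<^sub>m dB dB) \<in> Gset dB' dB"
    by (rule enc_Gset[OF POVM_exists]) (use assms(3) in auto)
  hence ne: "Gset dB' dB \<noteq> {}" by blast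
  obtain g0 where g0: "g0 \<in> Gset dB' dB" and mn: "\<forall>g\<in>Gset dB' dB. S.phi g0 \<le> S.phi g"
    using continuous_attains_inf[OF compact_Gset ne S.continuous_phi] by blast
  show "\<exists>C. CPTP dB dB' C \<and> (\<forall>X \<in> carrier_mat dA dA. N' X = C (N X))"
  proof (cases "S.phi g0 = 0")
    case True
    have "\<forall>l<dB'. S.A g0 l = S.F l"
    proof (intro allI impI)
      fix l assume l: "l < dB'"
      have z1: "\<forall>l\<in>{..<dB'}. (\<Sum>a<dA. \<Sum>b<dA. (cmod (S.A g0 l $$ (a,b) - S.F l $$ (a,b)))^2) = 0"
        using True unfolding S.phi_def by (subst (asm) sum_nonneg_eq_0_iff) (auto intro!: sum_nonneg)
      hence z2: "\<forall>a\<in>{..<dA}. (\<Sum>b<dA. (cmod (S.A g0 l $$ (a,b) - S.F l $$ (a,b)))^2) = 0"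
        using l by (subst (asm) sum_nonneg_eq_0_iff) (auto intro!: sum_nonneg)
      have z3: "S.A g0 l $$ (a,b) = S.F l $$ (a,b)" if ab: "a < dA" "b < dA" for a b
      proof -
        have "\<forall>b\<in>{..<dA}. (cmod (S.A g0 l $$ (a,b) - S.F l $$ (a,b)))^2 = 0"
          using z2 ab by (subst (asm) sum_nonneg_eq_0_iff) auto
        thus ?thesis using ab by simp
      qed
      show "S.A g0 l = S.F l"
        by (rule eq_matI) (use z3 in \<open>auto simp: S.A_def S.F_def adj_def\<close>)
    qed
    thus ?thesis by (rule S.exact_case[OF g0])
  next
    case False
    have "0 \<le> S.phi g0" unfolding S.phi_def by (intro sum_nonneg) auto
    hence "S.phi g0 > 0" using False by simp
    from S.sep_contra[OF g0 mn this mi] show ?thesis ..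
  qed
next
  assume "\<exists>C. CPTP dB dB' C \<and> (\<forall>X \<in> carrier_mat dA dA. N' X = C (N X))"
  then obtain C where C: "CPTP dB dB' C" and eq: "\<forall>X \<in> carrier_mat dA dA. N' X = C (N X)" by blast
  show "more_informative dA dB N dB' N'" by (rule dir_easy[OF assms(4,5) C eq])
qed


end
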